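(* If $f\in\mathcal S_T^1(\Omega_D,A)$, then $f$ is $T$-regular if and only if $\overline\partial_Tf=0$; moreover, (when $\Omega_D$ is a domain) $\mathcal{SR}_T(\Omega_D,A)$ is the image under $\mathcal I:\mathrm{Stem}^1_T(D,A\otimes\mathbb R^{2^\tau})\to\mathcal S_T^1(\Omega_D,A)$ of the kernel of $\overline\partial_T:\mathrm{Stem}^1_T\to\mathrm{Stem}^0_T$. If $f\in\mathcal S^2_T(\Omega_D,A)$, then $f$ is $T$-harmonic if and only if $\Delta_Tf=0$; moreover, the right $A$-submodule of $T$-harmonic elements of $\mathcal S^2_T(\Omega_D,A)$ is the image under $\mathcal I:\mathrm{Stem}^2_T\to\mathcal S^2_T(\Omega_D,A)$ of the kernel of $\Delta_T:\mathrm{Stem}^2_T\to\mathrm{Stem}^0_T$.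
   Context: $A$ is a finite-dimensional associative real algebra with unit and a $*$-involution $x\mapsto x^c$; $\mathbb S_A=\{x:x+x^c=0,xx^c=1\}\ne\emptyset$. $V\subseteq A$ has basis $(v_0=1,v_1,\dots,v_N)$, $N\ge1$, $v_s\in\mathbb S_A$ pairwise anticommuting for $s\ge1$, $V\subseteq\bigcup_{J\in\mathbb S_A}(\mathbb R+J\mathbb R)$; $A$ carries the Euclidean norm making a completion of this basis orthonormal. $\mathbb R_{\ell,m}=\mathrm{Span}_{\mathbb R}(v_\ell,\dots,v_m)$, $\mathbb S_{\ell,m}$ its unit sphere. $T=(t_0,\dots,t_\tau)$, $0\le t_0<\dots<t_\tau=N$, torus $\mathbb T=\mathbb S_{t_0+1,t_1}\times\cdots\times\mathbb S_{t_{\tau-1}+1,t_\tau}$ (for $\tau=0$ single index $J=\emptyset$). For $J\in\mathbb T$, $\beta\in\mathbb R^\tau$: $\beta J=\sum\beta_hJ_h$; $J_\emptyset=1$, $J_K=J_{k_1}\cdots J_{k_p}$; $\overline\beta^h$ flips the sign of $\beta_h$; $\sigma(h,K)$ is the parity of $\#\{k\in K:k\le h\}$. $D\subseteq\mathbb R_{0,t_0}\times\mathbb R^\tau$ is open, reflection invariant, $\Omega_D=\{\alpha+\beta J\}$ open. $T$-stem functions $F=\sum_KE_KF_K$ ($F_K(\alpha,\overline\beta^h)=F_K$ if $h\notin K$, $-F_K$ if $h\in K$) induce $T$-functions $\mathcal I(F)(\alpha+\beta J)=\sum_KJ_KF_K(\alpha,\beta)$; $\mathrm{Stem}^p_T$,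 $\mathcal S^p_T$: those of class $C^p$. Slice operators on $\mathbb R_J=\mathrm{Span}(v_0,\dots,v_{t_0},J_1,\dots,J_\tau)$: $\overline\partial_J=\sum_{s=0}^{t_0}v_s\partial_s+\sum_uJ_u\partial_{t_0+u}$, $\Delta_J=\sum_{s=0}^{t_0+\tau}\partial_s^2$ (directional derivatives along $v_s$, $J_u$). $f$ is $T$-regular (resp. $T$-harmonic) if $\overline\partial_Jf_J\equiv0$ (resp. $\Delta_Jf_J\equiv0$) for all $J\in\mathbb T$, where $f_J$ is the restriction to $\Omega_D\cap\mathbb R_J$. $\mathcal{SR}_T(\Omega_D,A)$ = $T$-functions that are $T$-regular. Global operators on stems: with $\alpha=\sum_{s\le t_0}x_sv_s$, $\overline\partial^u_\alpha=\partial_{\alpha_0}-(-1)^u\sum_{s=1}^{t_0}v_s\partial_{\alpha_s}$, $\overline\partial_\alpha=\overline\partial^1_\alpha$, $\partial_\alpha=\overline\partial^0_\alpha$; $(\overline\partial_TF)_K=\overline\partial^{|K|+1}_\alpha F_K+\sum_h(-1)^{\sigma(h,K)+1}\partial_{\beta_h}F_{K\triangle\{h\}}$, $(\Delta_TF)_K=\partial_\alpha\overline\partial_\alpha F_K+\sum_h\partial^2_{\beta_h}F_K$, and on $T$-functions $\overline\partial_T\mathcal I(F)=\mathcal I(\overline\partial_TF)$, $\Delta_T\mathcal I(F)=\mathcal I(\Delta_TF)$. *)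

theory Defs
  imports "HOL-Analysis.Analysis"
begin

text \<open>
  The algebra A is a type of class real_algebra_1 (associative unital real algebra)
  which is also a euclidean_space (finite dimensional with an inner product; the basis
  v_0,...,v_N is assumed orthonormal for that inner product in the theorem).
  Points of R^tau are functions nat to real supported in 1..tau, with the product topology
  (which on that subspace is the Euclidean topology).  A stem function F is a family
  F K (K a subset of 1..tau) of A-valued functions on D.
\<close>

type_synonym 'a stempt = "'a \<times> (nat \<Rightarrow> real)"

definition SA :: "('a::real_algebra_1 \<Rightarrow> 'a) \<Rightarrow> 'a set" where
  "SA cj = {x. x + cj x = 0 \<and> x * cj x = 1}"

definition Rlm :: "(nat \<Rightarrow> 'a::real_vector) \<Rightarrow> nat \<Rightarrow> nat \<Rightarrow> 'a set" where
  "Rlm v l m = span (v ` {l..m})"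

definition Slm :: "(nat \<Rightarrow> 'a::real_normed_vector) \<Rightarrow> nat \<Rightarrow> nat \<Rightarrow> 'a set" where
  "Slm v l m = {x \<in> Rlm v l m. norm x = 1}"

definition torus :: "(nat \<Rightarrow> 'a::real_normed_vector) \<Rightarrow> (nat \<Rightarrow> nat) \<Rightarrow> nat \<Rightarrow> (nat \<Rightarrow> 'a) set" where
  "torus v t \<tau> = {J. \<forall>h\<in>{1..\<tau>}. J h \<in> Slm v (t (h - 1) + 1) (t h)}"

definition Rtau :: "nat \<Rightarrow> (nat \<Rightarrow> real) set" where
  "Rtau \<tau> = {\<beta>. \<forall>h. h \<notin> {1..\<tau>} \<longrightarrow> \<beta> h = 0}"

definition betaJ :: "nat \<Rightarrow> (nat \<Rightarrow> real) \<Rightarrow> (nat \<Rightarrow> 'a::real_vector) \<Rightarrow> 'a" where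
  "betaJ \<tau> \<beta> J = (\<Sum>h=1..\<tau>. \<beta> h *\<^sub>R J h)"

definition JK :: "(nat \<Rightarrow> 'a::monoid_mult) \<Rightarrow> nat set \<Rightarrow> 'a" where
  "JK J K = prod_list (map J (sorted_list_of_set K))"

definition flip :: "nat \<Rightarrow> (nat \<Rightarrow> real) \<Rightarrow> nat \<Rightarrow> real" where
  "flip h \<beta> = \<beta>(h := - \<beta> h)"

definition OmegaD :: "(nat \<Rightarrow> 'a::real_normed_vector) \<Rightarrow> (nat \<Rightarrow> nat) \<Rightarrow> nat \<Rightarrow> 'a stempt set \<Rightarrow> 'a set" where
  "OmegaD v t \<tau> D = {\<alpha> + betaJ \<tau> \<beta> J | \<alpha> \<beta> J. (\<alpha>, \<beta>) \<in> D \<and> J \<in> torus v t \<tau>}"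

definition dA :: "(nat \<Rightarrow> 'a::real_normed_vector) \<Rightarrow> nat \<Rightarrow> ('a stempt \<Rightarrow> 'b::real_normed_vector) \<Rightarrow> 'a stempt \<Rightarrow> 'b" where
  "dA v s G = (\<lambda>(\<alpha>, \<beta>). vector_derivative (\<lambda>r. G (\<alpha> + r *\<^sub>R v s, \<beta>)) (at 0))"

definition dB :: "nat \<Rightarrow> ('a stempt \<Rightarrow> 'b::real_normed_vector) \<Rightarrow> 'a stempt \<Rightarrow> 'b" where
  "dB h G = (\<lambda>(\<alpha>, \<beta>). vector_derivative (\<lambda>r. G (\<alpha>, \<beta>(h := \<beta> h + r))) (at 0))"

definition hasA :: "(nat \<Rightarrow> 'a::real_normed_vector) \<Rightarrow> nat \<Rightarrow> ('a stempt \<Rightarrow> 'b::real_normed_vector) \<Rightarrow> 'a stempt \<Rightarrow> bool" where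
  "hasA v s G z = ((\<lambda>r. G (fst z + r *\<^sub>R v s, snd z)) differentiable (at 0))"

definition hasB :: "nat \<Rightarrow> ('a stempt \<Rightarrow> 'b::real_normed_vector) \<Rightarrow> 'a stempt \<Rightarrow> bool" where
  "hasB h G z = ((\<lambda>r. G (fst z, (snd z)(h := snd z h + r))) differentiable (at 0))"

fun Cp :: "(nat \<Rightarrow> 'a::real_normed_vector) \<Rightarrow> nat \<Rightarrow> nat \<Rightarrow> 'a stempt set \<Rightarrow> nat
           \<Rightarrow> ('a stempt \<Rightarrow> 'b::real_normed_vector) \<Rightarrow> bool" where
  "Cp v t0 \<tau> D 0 G = continuous_on D G"
| "Cp v t0 \<tau> D (Suc p) G =
     (continuous_on D G
      \<and> (\<forall>s\<in>{0..t0}. (\<forall>z\<in>D. hasA v s G z) \<and> Cp v t0 \<tau> D p (dA v s G))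
      \<and> (\<forall>h\<in>{1..\<tau>}. (\<forall>z\<in>D. hasB h G z) \<and> Cp v t0 \<tau> D p (dB h G)))"

definition is_stem :: "nat \<Rightarrow> 'a stempt set \<Rightarrow> (nat set \<Rightarrow> 'a stempt \<Rightarrow> 'a::real_vector) \<Rightarrow> bool" where
  "is_stem \<tau> D F = (\<forall>K. K \<subseteq> {1..\<tau>} \<longrightarrow> (\<forall>h\<in>{1..\<tau>}. \<forall>\<alpha> \<beta>. (\<alpha>, \<beta>) \<in> D \<longrightarrow>
       F K (\<alpha>, flip h \<beta>) = (if h \<in> K then - F K (\<alpha>, \<beta>) else F K (\<alpha>, \<beta>))))"

definition Stem :: "(nat \<Rightarrow> 'a::real_normed_vector) \<Rightarrow> nat \<Rightarrow> nat \<Rightarrow> 'a stempt set \<Rightarrow> nat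
                    \<Rightarrow> (nat set \<Rightarrow> 'a stempt \<Rightarrow> 'a) set" where
  "Stem v t0 \<tau> D p = {F. is_stem \<tau> D F \<and> (\<forall>K. K \<subseteq> {1..\<tau>} \<longrightarrow> Cp v t0 \<tau> D p (F K))}"

definition induces :: "(nat \<Rightarrow> 'a::{real_normed_vector,monoid_mult}) \<Rightarrow> (nat \<Rightarrow> nat) \<Rightarrow> nat \<Rightarrow> 'a stempt set
                       \<Rightarrow> (nat set \<Rightarrow> 'a stempt \<Rightarrow> 'a) \<Rightarrow> ('a \<Rightarrow> 'a) \<Rightarrow> bool" where
  "induces v t \<tau> D F f = (\<forall>\<alpha> \<beta> J. (\<alpha>, \<beta>) \<in> D \<longrightarrow> J \<in> torus v t \<tau> \<longrightarrow>
       f (\<alpha> + betaJ \<tau> \<beta> J) = (\<Sum>K\<in>Pow {1..\<tau>}. JK J K * F K (\<alpha>, \<beta>)))"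

definition Ivanishes :: "(nat \<Rightarrow> 'a::{real_normed_vector,monoid_mult}) \<Rightarrow> (nat \<Rightarrow> nat) \<Rightarrow> nat \<Rightarrow> 'a stempt set
                       \<Rightarrow> (nat set \<Rightarrow> 'a stempt \<Rightarrow> 'a) \<Rightarrow> bool" where
  "Ivanishes v t \<tau> D G = (\<forall>\<alpha> \<beta> J. (\<alpha>, \<beta>) \<in> D \<longrightarrow> J \<in> torus v t \<tau> \<longrightarrow>
       (\<Sum>K\<in>Pow {1..\<tau>}. JK J K * G K (\<alpha>, \<beta>)) = 0)"

definition Sp :: "(nat \<Rightarrow> 'a::{real_normed_vector,monoid_mult}) \<Rightarrow> (nat \<Rightarrow> nat) \<Rightarrow> nat \<Rightarrow> 'a stempt set
                  \<Rightarrow> nat \<Rightarrow> ('a \<Rightarrow> 'a) set" where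
  "Sp v t \<tau> D p = {f. \<exists>F\<in>Stem v (t 0) \<tau> D p. induces v t \<tau> D F f}"

definition dbar_alpha :: "(nat \<Rightarrow> 'a::{real_normed_vector,ring_1}) \<Rightarrow> nat \<Rightarrow> nat
                          \<Rightarrow> ('a stempt \<Rightarrow> 'a) \<Rightarrow> 'a stempt \<Rightarrow> 'a" where
  "dbar_alpha v t0 u G = (\<lambda>z. dA v 0 G z - ((-1::real) ^ u) *\<^sub>R (\<Sum>s=1..t0. v s * dA v s G z))"

definition dbarT :: "(nat \<Rightarrow> 'a::{real_normed_vector,ring_1}) \<Rightarrow> nat \<Rightarrow> nat
                     \<Rightarrow> (nat set \<Rightarrow> 'a stempt \<Rightarrow> 'a) \<Rightarrow> nat set \<Rightarrow> 'a stempt \<Rightarrow> 'a" where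
  "dbarT v t0 \<tau> F K = (\<lambda>z. dbar_alpha v t0 (card K + 1) (F K) z
      + (\<Sum>h=1..\<tau>. ((-1::real) ^ (card {k\<in>K. k \<le> h} + 1)) *\<^sub>R
                     dB h (F (if h \<in> K then K - {h} else insert h K)) z))"

definition LapT :: "(nat \<Rightarrow> 'a::{real_normed_vector,ring_1}) \<Rightarrow> nat \<Rightarrow> nat
                     \<Rightarrow> (nat set \<Rightarrow> 'a stempt \<Rightarrow> 'a) \<Rightarrow> nat set \<Rightarrow> 'a stempt \<Rightarrow> 'a" where
  "LapT v t0 \<tau> F K = (\<lambda>z. dbar_alpha v t0 0 (dbar_alpha v t0 1 (F K)) z
      + (\<Sum>h=1..\<tau>. dB h (dB h (F K)) z))"

definition RJ :: "(nat \<Rightarrow> 'a::real_vector) \<Rightarrow> nat \<Rightarrow> nat \<Rightarrow> (nat \<Rightarrow> 'a) \<Rightarrow> 'a set" where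
  "RJ v t0 \<tau> J = span (v ` {0..t0} \<union> J ` {1..\<tau>})"

definition dd :: "('a::real_normed_vector \<Rightarrow> 'b::real_normed_vector) \<Rightarrow> 'a \<Rightarrow> 'a \<Rightarrow> 'b" where
  "dd f w x = vector_derivative (\<lambda>r. f (x + r *\<^sub>R w)) (at 0)"

definition hasd :: "('a::real_normed_vector \<Rightarrow> 'b::real_normed_vector) \<Rightarrow> 'a \<Rightarrow> 'a \<Rightarrow> bool" where
  "hasd f w x = ((\<lambda>r. f (x + r *\<^sub>R w)) differentiable (at 0))"

definition T_regular :: "(nat \<Rightarrow> 'a::{real_normed_vector,ring_1}) \<Rightarrow> (nat \<Rightarrow> nat) \<Rightarrow> nat \<Rightarrow> 'a stempt set
                         \<Rightarrow> ('a \<Rightarrow> 'a) \<Rightarrow> bool" where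
  "T_regular v t \<tau> D f = (\<forall>J\<in>torus v t \<tau>. \<forall>x\<in>OmegaD v t \<tau> D \<inter> RJ v (t 0) \<tau> J.
      (\<forall>s\<in>{0..t 0}. hasd f (v s) x) \<and> (\<forall>u\<in>{1..\<tau>}. hasd f (J u) x) \<and>
      (\<Sum>s=0..t 0. v s * dd f (v s) x) + (\<Sum>u=1..\<tau>. J u * dd f (J u) x) = 0)"

definition T_harmonic :: "(nat \<Rightarrow> 'a::{real_normed_vector,ring_1}) \<Rightarrow> (nat \<Rightarrow> nat) \<Rightarrow> nat \<Rightarrow> 'a stempt set
                         \<Rightarrow> ('a \<Rightarrow> 'a) \<Rightarrow> bool" where
  "T_harmonic v t \<tau> D f = (\<forall>J\<in>torus v t \<tau>. \<forall>x\<in>OmegaD v t \<tau> D \<inter> RJ v (t 0) \<tau> J.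
      (\<forall>s\<in>{0..t 0}. hasd f (v s) x \<and> hasd (dd f (v s)) (v s) x) \<and>
      (\<forall>u\<in>{1..\<tau>}. hasd f (J u) x \<and> hasd (dd f (J u)) (J u) x) \<and>
      (\<Sum>s=0..t 0. dd (dd f (v s)) (v s) x) + (\<Sum>u=1..\<tau>. dd (dd f (J u)) (J u) x) = 0)"

definition SR :: "(nat \<Rightarrow> 'a::{real_normed_vector,ring_1}) \<Rightarrow> (nat \<Rightarrow> nat) \<Rightarrow> nat \<Rightarrow> 'a stempt set
                  \<Rightarrow> ('a \<Rightarrow> 'a) set" where
  "SR v t \<tau> D = {f \<in> Sp v t \<tau> D 1. T_regular v t \<tau> D f}"

end

theory Submission
  imports Defs
begin

lemma span_img_sum:
  assumes "finite I" "y \<in> span (g ` I)"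
  shows "\<exists>c. y = (\<Sum>i\<in>I. c i *\<^sub>R g i)"
  using assms(2)
proof (induction rule: span_induct_alt)
  case base
  then show ?case by (intro exI[of _ "\<lambda>_. 0"]) simp
next
  case (step c x y)
  then obtain i d where i: "i \<in> I" "x = g i" and d: "y = (\<Sum>i\<in>I. d i *\<^sub>R g i)" by blast
  show ?case
  proof (intro exI[of _ "\<lambda>j. d j + (if j = i then c else 0)"])
    have "(\<Sum>j\<in>I. (d j + (if j = i then c else 0)) *\<^sub>R g j)
        = (\<Sum>j\<in>I. d j *\<^sub>R g j) + (\<Sum>j\<in>I. (if j = i then c *\<^sub>R g j else 0))"
      unfolding sum.distrib[symmetric] by (intro sum.cong) (auto simp: scaleR_add_left)
    also have "\<dots> = y + c *\<^sub>R x" using i assms(1) d by (simp add: sum.delta)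
    finally show "c *\<^sub>R x + y = (\<Sum>j\<in>I. (d j + (if j = i then c else 0)) *\<^sub>R g j)" by simp
  qed
qed

locale cs =
  fixes v :: "nat \<Rightarrow> 'a::{real_algebra_1,euclidean_space}" and N :: nat
  assumes v0: "v 0 = 1"
    and vsq: "\<And>s. s \<in> {1..N} \<Longrightarrow> v s * v s = -1"
    and vanti: "\<And>s r. s \<in> {1..N} \<Longrightarrow> r \<in> {1..N} \<Longrightarrow> s \<noteq> r \<Longrightarrow> v s * v r = - (v r * v s)"
    and vON: "\<And>s r. s \<le> N \<Longrightarrow> r \<le> N \<Longrightarrow> inner (v s) (v r) = (if s = r then 1 else 0)"
begin

lemma orth_v:
  assumes "S \<subseteq> {..N}" "r \<le> N" "r \<notin> S" "x \<in> span (v ` S)"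
  shows "inner x (v r) = 0"
  using assms(4)
proof (induction rule: span_induct_alt)
  case base then show ?case by simp
next
  case (step c x y)
  then obtain s where "s \<in> S" "x = v s" by auto
  then have "inner x (v r) = 0" using assms vON[of s r] by auto
  then show ?case using step by (simp add: inner_add_left)
qed

lemma orth:
  assumes "S \<subseteq> {..N}" "S' \<subseteq> {..N}" "S \<inter> S' = {}" "x \<in> span (v ` S)" "y \<in> span (v ` S')"
  shows "inner x y = 0"
  using assms(5)
proof (induction rule: span_induct_alt)
  case base then show ?case by simp
next
  case (step c z y)
  then obtain s where s: "s \<in> S'" "z = v s" by auto
  then have "inner x z = 0" using assms orth_v[of S s x] by auto
  then show ?case using step by (simp add: inner_add_right)
qed

lemma reconstr:
  assumes "finite S" "S \<subseteq> {..N}" "y \<in> span (v ` S)"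
  shows "(\<Sum>s\<in>S. inner y (v s) *\<^sub>R v s) = y"
  using assms(3)
proof (induction rule: span_induct_alt)
  case base then show ?case by simp
next
  case (step c x y)
  then obtain r where r: "r \<in> S" "x = v r" by auto
  have "(\<Sum>s\<in>S. inner (c *\<^sub>R x + y) (v s) *\<^sub>R v s)
      = (\<Sum>s\<in>S. (c * inner x (v s)) *\<^sub>R v s) + (\<Sum>s\<in>S. inner y (v s) *\<^sub>R v s)"
    by (simp add: inner_add_left scaleR_add_left sum.distrib)
  also have "(\<Sum>s\<in>S. (c * inner x (v s)) *\<^sub>R v s) = (\<Sum>s\<in>S. if s = r then c *\<^sub>R v s else 0)"
  proof (intro sum.cong refl)
    fix s assume "s \<in> S"
    then have "s \<le> N" "r \<le> N" using r assms(2) by auto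
    then show "(c * inner x (v s)) *\<^sub>R v s = (if s = r then c *\<^sub>R v s else 0)"
      using r vON[of r s] by auto
  qed
  also have "\<dots> = c *\<^sub>R x" using r assms(1) by (simp add: sum.delta)
  finally show ?case using step by simp
qed

lemma anti_span:
  assumes "x \<in> span (v ` {1..N})" "y \<in> span (v ` {1..N})"
  shows "x * y + y * x = (-2 * inner x y) *\<^sub>R 1"
proof -
  have base: "z * v r + v r * z = (-2 * inner z (v r)) *\<^sub>R 1" if "z \<in> span (v ` {1..N})" "r \<in> {1..N}" for z r
    using that(1)
  proof (induction rule: span_induct_alt)
    case base then show ?case by simp
  next
    case (step c x y)
    then obtain s where s: "s \<in> {1..N}" "x = v s" by auto
    have "x * v r + v r * x = (-2 * inner x (v r)) *\<^sub>R 1"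
    proof (cases "s = r")
      case True
      then show ?thesis using s that vsq[of r] vON[of r r] by (simp add: scaleR_conv_of_real)
    next
      case False
      then show ?thesis using s that vanti[of s r] vON[of s r] by simp
    qed
    have "(c *\<^sub>R x + y) * v r + v r * (c *\<^sub>R x + y) = c *\<^sub>R (x * v r + v r * x) + (y * v r + v r * y)"
      by (simp add: distrib_left distrib_right scaleR_add_right)
    also have "\<dots> = (-2 * inner (c *\<^sub>R x + y) (v r)) *\<^sub>R 1"
      using step(2) \<open>x * v r + v r * x = _\<close> by (simp add: inner_add_left algebra_simps)
    finally show ?case .
  qed
  show ?thesis using assms(2)
  proof (induction rule: span_induct_alt)
    case base then show ?case by simp
  next
    case (step c z w)
    then obtain r where r: "r \<in> {1..N}" "z = v r" by auto
    have "x * z + z * x = (-2 * inner x z) *\<^sub>R 1" using base[OF assms(1) r(1)] r by simp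
    have "x * (c *\<^sub>R z + w) + (c *\<^sub>R z + w) * x = c *\<^sub>R (x * z + z * x) + (x * w + w * x)"
      by (simp add: distrib_left distrib_right scaleR_add_right)
    also have "\<dots> = (-2 * inner x (c *\<^sub>R z + w)) *\<^sub>R 1"
      using step(2) \<open>x * z + z * x = _\<close> by (simp add: inner_add_right algebra_simps)
    finally show ?case .
  qed
qed

end

lemma prod_anti:
  fixes J :: "nat \<Rightarrow> 'a::ring_1"
  assumes "\<forall>k\<in>set xs. w * J k = - (J k * w)"
  shows "w * prod_list (map J xs) = (-1)^length xs * (prod_list (map J xs) * w)"
  using assms
proof (induction xs)
  case Nil then show ?case by simp
next
  case (Cons a xs)
  have "w * prod_list (map J (a # xs)) = (w * J a) * prod_list (map J xs)" by (simp add: mult.assoc)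
  also have "\<dots> = - (J a * (w * prod_list (map J xs)))" using Cons by (simp add: mult.assoc)
  also have "\<dots> = - (J a * ((-1)^length xs * (prod_list (map J xs) * w)))" using Cons by simp
  also have "\<dots> = (-1)^length (a # xs) * (prod_list (map J (a # xs)) * w)"
    by (simp add: minus_one_power_iff mult.assoc)
  finally show ?case .
qed

lemma JK_anti:
  fixes J :: "nat \<Rightarrow> 'a::ring_1"
  assumes "finite K" "\<forall>k\<in>K. w * J k = - (J k * w)"
  shows "w * JK J K = (-1)^card K * (JK J K * w)"
  unfolding JK_def using prod_anti[of "sorted_list_of_set K" w J] assms by simp

lemma sorted_split:
  assumes "finite A" "finite B" "\<forall>a\<in>A. \<forall>b\<in>B. a < (b::nat)"
  shows "sorted_list_of_set (A \<union> B) = sorted_list_of_set A @ sorted_list_of_set B"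
proof -
  have d: "A \<inter> B = {}" using assms(3) by auto
  have "sorted_wrt (<) (sorted_list_of_set A @ sorted_list_of_set B)"
    using assms by (auto simp: sorted_wrt_append)
  moreover have "set (sorted_list_of_set A @ sorted_list_of_set B) = A \<union> B" using assms by simp
  moreover have "length (sorted_list_of_set A @ sorted_list_of_set B) = card (A \<union> B)"
    using assms d by (simp add: card_Un_disjoint)
  ultimately show ?thesis
    using sorted_list_of_set_unique[of "A \<union> B" "sorted_list_of_set A @ sorted_list_of_set B"] assms by blast
qed

lemma JK_union:
  fixes J :: "nat \<Rightarrow> 'a::monoid_mult"
  assumes "finite A" "finite B" "\<forall>a\<in>A. \<forall>b\<in>B. a < (b::nat)"
  shows "JK J (A \<union> B) = JK J A * JK J B"
  unfolding JK_def using sorted_split[OF assms] by simp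

lemma JK_single: "JK J {u} = J u" unfolding JK_def by simp

lemma JK_split:
  fixes J :: "nat \<Rightarrow> 'a::monoid_mult"
  assumes "finite K" "u \<notin> K"
  shows "JK J (insert u K) = JK J {k\<in>K. k<u} * J u * JK J {k\<in>K. u<k}"
    and "JK J K = JK J {k\<in>K. k<u} * JK J {k\<in>K. u<k}"
proof -
  have e1: "insert u K = {k\<in>K. k<u} \<union> ({u} \<union> {k\<in>K. u<k})" using assms by auto
  have e2: "K = {k\<in>K. k<u} \<union> {k\<in>K. u<k}" using assms(2) nat_neq_iff by auto
  show "JK J (insert u K) = JK J {k\<in>K. k<u} * J u * JK J {k\<in>K. u<k}"
  proof -
    have "JK J ({k\<in>K. k<u} \<union> ({u} \<union> {k\<in>K. u<k})) = JK J {k\<in>K. k<u} * JK J ({u} \<union> {k\<in>K. u<k})"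
      by (rule JK_union) (use assms in auto)
    moreover have "JK J ({u} \<union> {k\<in>K. u<k}) = JK J {u} * JK J {k\<in>K. u<k}"
      by (rule JK_union) (use assms in auto)
    ultimately show ?thesis using e1 by (simp add: JK_single mult.assoc)
  qed
  show "JK J K = JK J {k\<in>K. k<u} * JK J {k\<in>K. u<k}"
    apply (subst e2)
    apply (subst JK_union, use assms in auto)
    done
qed

lemma J_mul_JK:
  fixes J :: "nat \<Rightarrow> 'a::ring_1"
  assumes "finite K" "J u * J u = -1" "\<forall>k\<in>K. k \<noteq> u \<longrightarrow> J u * J k = - (J k * J u)"
  shows "u \<notin> K \<Longrightarrow> J u * JK J K = (-1)^card {k\<in>K. k<u} * JK J (insert u K)"
    and "u \<in> K \<Longrightarrow> J u * JK J K = - ((-1)^card {k\<in>K. k<u} * JK J (K - {u}))"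
proof -
  have gen: "J u * JK J {k\<in>L. k<u} = (-1)^card {k\<in>L. k<u} * (JK J {k\<in>L. k<u} * J u)"
    if "L \<subseteq> K" for L
    apply (rule JK_anti)
    using assms(1) that assms(3) by (auto intro: finite_subset)
  show "u \<notin> K \<Longrightarrow> J u * JK J K = (-1)^card {k\<in>K. k<u} * JK J (insert u K)"
  proof -
    assume u: "u \<notin> K"
    have "J u * JK J K = (J u * JK J {k\<in>K. k<u}) * JK J {k\<in>K. u<k}"
      unfolding JK_split(2)[OF assms(1) u, of J] by (simp only: mult.assoc)
    also have "\<dots> = (-1)^card {k\<in>K. k<u} * JK J (insert u K)"
      using gen[of K] JK_split(1)[OF assms(1) u, of J] by (simp add: mult.assoc)
    finally show ?thesis .
  qed
  show "u \<in> K \<Longrightarrow> J u * JK J K = - ((-1)^card {k\<in>K. k<u} * JK J (K - {u}))"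
  proof -
    assume u: "u \<in> K"
    let ?K = "K - {u}"
    have f: "finite ?K" "u \<notin> ?K" using assms(1) by auto
    have c: "{k\<in>?K. k<u} = {k\<in>K. k<u}" by auto
    have K: "insert u ?K = K" using u by auto
    have "J u * JK J K = (J u * JK J {k\<in>?K. k<u}) * J u * JK J {k\<in>?K. u<k}"
    proof -
      have "JK J K = JK J {k\<in>?K. k<u} * J u * JK J {k\<in>?K. u<k}"
        using JK_split(1)[OF f, of J] unfolding K .
      then show ?thesis by (simp add: mult.assoc)
    qed
    also have "\<dots> = (-1)^card {k\<in>K. k<u} * JK J {k\<in>?K. k<u} * (J u * J u) * JK J {k\<in>?K. u<k}"
      unfolding gen[of ?K, OF Diff_subset] by (simp only: mult.assoc c)
    also have "\<dots> = - ((-1)^card {k\<in>K. k<u} * JK J ?K)"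
      unfolding JK_split(2)[OF f, of J] by (simp only: mult.assoc assms(2) mult_minus_left mult_minus_right mult_1_left mult_1_right)
    finally show ?thesis .
  qed
qed

lemma prod_flip:
  fixes J :: "nat \<Rightarrow> 'a::ring_1"
  assumes "distinct xs"
  shows "prod_list (map (J(h := - J h)) xs) = (if h \<in> set xs then - prod_list (map J xs) else prod_list (map J xs))"
  using assms
proof (induction xs)
  case Nil then show ?case by simp
next
  case (Cons a xs)
  have "prod_list (map (J(h := - J h)) xs) = prod_list (map J xs)" if "h \<notin> set xs"
    using that by (intro arg_cong[where f=prod_list] map_cong) auto
  then show ?case using Cons by auto
qed

lemma JK_flip:
  fixes J :: "nat \<Rightarrow> 'a::ring_1"
  assumes "finite K"
  shows "JK (J(h := - J h)) K = (if h \<in> K then - JK J K else JK J K)"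
  unfolding JK_def using prod_flip[of "sorted_list_of_set K" J h] assms by simp

lemma prod_leftinv:
  fixes J :: "nat \<Rightarrow> 'a::ring_1"
  assumes "\<forall>k\<in>set xs. J k * J k = -1"
  shows "\<exists>b. b * prod_list (map J xs) = 1"
  using assms
proof (induction xs)
  case Nil then show ?case by simp
next
  case (Cons a xs)
  then obtain b where b: "b * prod_list (map J xs) = 1" by auto
  have "(b * (- J a)) * prod_list (map J (a # xs)) = b * (- (J a * J a)) * prod_list (map J xs)"
    by (simp add: mult.assoc)
  also have "\<dots> = 1" using Cons b by simp
  finally show ?case by blast
qed

lemma JK_cancel:
  fixes J :: "nat \<Rightarrow> 'a::ring_1"
  assumes "finite K" "\<forall>k\<in>K. J k * J k = -1" "JK J K * c = 0"
  shows "c = 0"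
proof -
  obtain b where b: "b * JK J K = 1"
    using prod_leftinv[of "sorted_list_of_set K" J] assms unfolding JK_def by auto
  have "c = (b * JK J K) * c" using b by simp
  also have "\<dots> = 0" using assms(3) by (simp add: mult.assoc)
  finally show ?thesis .
qed

lemma scaleR_m1pow: "((-1::real)^n) *\<^sub>R (x::'a::real_algebra_1) = (-1)^n * x"
  by (simp add: scaleR_conv_of_real)

lemma m1pow_comm: "(-1::'a::ring_1)^n * x = x * (-1)^n"
  by (simp add: minus_one_power_iff)

definition symd :: "nat \<Rightarrow> nat set \<Rightarrow> nat set" where
  "symd h K = (if h \<in> K then K - {h} else insert h K)"

lemma symd_invol: "symd h (symd h K) = K"
  unfolding symd_def by auto

locale cs2 = cs v N for v :: "nat \<Rightarrow> 'a::{real_algebra_1,euclidean_space}" and N +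
  fixes t :: "nat \<Rightarrow> nat" and \<tau> :: nat
  assumes t_mono: "strict_mono_on {0..\<tau>} t" and t_last: "t \<tau> = N"
begin

definition blk :: "nat \<Rightarrow> nat set" where "blk h = {t (h - 1) + 1 .. t h}"

lemma t_lt: "i < j \<Longrightarrow> j \<le> \<tau> \<Longrightarrow> t i < t j"
  using t_mono by (auto intro: strict_mono_onD)

lemma t_le: "i \<le> j \<Longrightarrow> j \<le> \<tau> \<Longrightarrow> t i \<le> t j"
  using t_lt by (cases "i = j") (auto simp: le_less)

lemma blk_props:
  assumes "h \<in> {1..\<tau>}"
  shows "blk h \<subseteq> {1..N}" "\<And>s. s \<in> blk h \<Longrightarrow> t 0 < s" "t h \<in> blk h" "finite (blk h)"
proof -
  have a: "t (h - 1) < t h" using assms t_lt[of "h - 1" h] by auto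
  have b: "t 0 \<le> t (h - 1)" using assms t_le[of 0 "h - 1"] by auto
  have c: "t h \<le> N" using assms t_le[of h \<tau>] t_last by auto
  show "blk h \<subseteq> {1..N}" using a b c unfolding blk_def by auto
  show "\<And>s. s \<in> blk h \<Longrightarrow> t 0 < s" using b unfolding blk_def by auto
  show "t h \<in> blk h" using a unfolding blk_def by auto
  show "finite (blk h)" unfolding blk_def by simp
qed

lemma blk_disj:
  assumes "h \<in> {1..\<tau>}" "g \<in> {1..\<tau>}" "h \<noteq> g"
  shows "blk h \<inter> blk g = {}"
proof -
  have *: "blk a \<inter> blk b = {}" if "a \<in> {1..\<tau>}" "b \<in> {1..\<tau>}" "a < b" for a b
  proof -
    have "t a \<le> t (b - 1)" using that t_le[of a "b - 1"] by auto
    then show ?thesis unfolding blk_def by auto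
  qed
  show ?thesis using assms *[of h g] *[of g h] by (cases "h < g") (auto simp: Int_commute)
qed

lemma torus_J:
  assumes "J \<in> torus v t \<tau>" "h \<in> {1..\<tau>}"
  shows "J h \<in> span (v ` blk h)" "norm (J h) = 1" "J h \<in> span (v ` {1..N})"
proof -
  show 1: "J h \<in> span (v ` blk h)" "norm (J h) = 1"
    using assms unfolding torus_def Slm_def Rlm_def blk_def by auto
  show "J h \<in> span (v ` {1..N})"
    using 1(1) span_mono[of "v ` blk h" "v ` {1..N}"] blk_props(1)[OF assms(2)] by auto
qed

lemma J_sq:
  assumes "J \<in> torus v t \<tau>" "h \<in> {1..\<tau>}"
  shows "J h * J h = -1"
proof -
  have "J h * J h + J h * J h = (-2 * inner (J h) (J h)) *\<^sub>R 1"
    using anti_span torus_J(3)[OF assms] by blast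
  moreover have "inner (J h) (J h) = 1" using torus_J(2)[OF assms] by (simp add: dot_square_norm)
  ultimately have "2 *\<^sub>R (J h * J h) = 2 *\<^sub>R (-1)" by (simp add: scaleR_2)
  then show ?thesis using scaleR_cancel_left[of 2 "J h * J h" "-1"] by simp
qed

lemma J_anti:
  assumes "J \<in> torus v t \<tau>" "h \<in> {1..\<tau>}" "g \<in> {1..\<tau>}" "h \<noteq> g"
  shows "J h * J g = - (J g * J h)"
proof -
  have "blk h \<subseteq> {..N}" "blk g \<subseteq> {..N}"
    using blk_props(1)[OF assms(2)] blk_props(1)[OF assms(3)] by auto
  then have "inner (J h) (J g) = 0"
    using orth[of "blk h" "blk g" "J h" "J g"]
      blk_disj[OF assms(2-4)] torus_J(1)[OF assms(1,2)] torus_J(1)[OF assms(1,3)] by auto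
  then have "J h * J g + J g * J h = 0"
    using anti_span torus_J(3)[OF assms(1,2)] torus_J(3)[OF assms(1,3)] by simp
  then show ?thesis by (simp add: eq_neg_iff_add_eq_0)
qed

lemma vJ_anti:
  assumes "J \<in> torus v t \<tau>" "h \<in> {1..\<tau>}" "s \<in> {1..t 0}"
  shows "v s * J h = - (J h * v s)"
proof -
  have s1: "s \<notin> blk h" using blk_props(2)[OF assms(2), of s] assms(3) by auto
  have s2: "s \<le> N" using assms(3) t_le[of 0 \<tau>] t_last by auto
  have b: "blk h \<subseteq> {..N}" using blk_props(1)[OF assms(2)] by auto
  have "inner (v s) (J h) = 0"
    using orth[of "{s}" "blk h" "v s" "J h"] b s1 s2 torus_J(1)[OF assms(1,2)]
    by (auto intro: span_base)
  moreover note s = s1 s2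
  moreover have "v s \<in> span (v ` {1..N})" using s assms(3) by (auto intro: span_base)
  ultimately have "v s * J h + J h * v s = 0"
    using anti_span torus_J(3)[OF assms(1,2)] by simp
  then show ?thesis by (simp add: eq_neg_iff_add_eq_0)
qed

lemma torus_ne: "(\<lambda>h. v (t h)) \<in> torus v t \<tau>"
proof -
  have "v (t h) \<in> Slm v (t (h - 1) + 1) (t h)" if "h \<in> {1..\<tau>}" for h
  proof -
    have "t h \<in> blk h" "t h \<le> N" using blk_props[OF that] by auto
    then show ?thesis unfolding Slm_def Rlm_def blk_def
      using vON[of "t h" "t h"] by (auto intro: span_base simp: norm_eq_sqrt_inner)
  qed
  then show ?thesis unfolding torus_def by auto
qed

lemma torus_flip:
  assumes "J \<in> torus v t \<tau>"
  shows "J(h := - J h) \<in> torus v t \<tau>"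
  using assms unfolding torus_def Slm_def Rlm_def by (auto intro: span_neg)

lemma vJK:
  assumes "J \<in> torus v t \<tau>" "s \<in> {1..t 0}" "K \<subseteq> {1..\<tau>}"
  shows "v s * JK J K = (-1)^card K * (JK J K * v s)"
proof (rule JK_anti)
  show "finite K" using assms(3) finite_subset by blast
  show "\<forall>k\<in>K. v s * J k = - (J k * v s)" using assms vJ_anti by blast
qed

lemma JJK:
  assumes "J \<in> torus v t \<tau>" "h \<in> {1..\<tau>}" "L \<subseteq> {1..\<tau>}"
  shows "J h * JK J L = (-1)^(card {k\<in>symd h L. k \<le> h} + 1) * JK J (symd h L)"
proof -
  have fin: "finite L" using assms(3) finite_subset by auto
  have sq: "J h * J h = -1" using J_sq assms by blast
  have an: "\<forall>k\<in>L. k \<noteq> h \<longrightarrow> J h * J k = - (J k * J h)"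
  proof (intro ballI impI)
    fix k assume "k \<in> L" "k \<noteq> h"
    then show "J h * J k = - (J k * J h)" using J_anti[OF assms(1,2), of k] assms(3) by blast
  qed
  show ?thesis
  proof (cases "h \<in> L")
    case True
    have e: "{k\<in>symd h L. k \<le> h} = {k\<in>L. k < h}" using True unfolding symd_def by auto
    have e': "symd h L = L - {h}" using True unfolding symd_def by auto
    have e2: "{k \<in> L. k \<noteq> h \<and> k \<le> h} = {k\<in>L. k < h}" by auto
    show ?thesis using J_mul_JK(2)[OF fin sq an True] by (simp add: e e' e2)
  next
    case False
    have e: "{k\<in>symd h L. k \<le> h} = insert h {k\<in>L. k < h}" using False unfolding symd_def by auto
    have c: "card (insert h {k\<in>L. k < h}) = Suc (card {k\<in>L. k < h})" using fin by simp
    have e': "symd h L = insert h L" using False unfolding symd_def by auto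
    have e2: "{k. (k = h \<or> k \<in> L) \<and> k \<le> h} = insert h {k\<in>L. k < h}" by auto
    show ?thesis using J_mul_JK(1)[OF fin sq an False] by (simp add: e e' c e2)
  qed
qed

end

context cs2 begin

lemma symd_Pow: "u \<in> {1..\<tau>} \<Longrightarrow> K \<in> Pow {1..\<tau>} \<Longrightarrow> symd u K \<in> Pow {1..\<tau>}"
  unfolding symd_def by auto

lemma sum_symd:
  assumes "u \<in> {1..\<tau>}"
  shows "(\<Sum>K\<in>Pow {1..\<tau>}. g (symd u K) K) = (\<Sum>L\<in>Pow {1..\<tau>}. g L (symd u L))"
  apply (rule sum.reindex_bij_witness[of _ "symd u" "symd u"])
  apply (simp_all add: symd_invol)
  using assms unfolding symd_def by auto

lemma dbar_identity:
  assumes J: "J \<in> torus v t \<tau>"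
  shows "(\<Sum>s=0..t 0. v s * (\<Sum>K\<in>Pow {1..\<tau>}. JK J K * A s K))
       + (\<Sum>u=1..\<tau>. J u * (\<Sum>K\<in>Pow {1..\<tau>}. JK J K * B u K))
   = (\<Sum>K\<in>Pow {1..\<tau>}. JK J K * ((A 0 K - ((-1::real)^(card K + 1)) *\<^sub>R (\<Sum>s=1..t 0. v s * A s K))
        + (\<Sum>h=1..\<tau>. ((-1::real)^(card {k\<in>K. k \<le> h} + 1)) *\<^sub>R B h (if h \<in> K then K - {h} else insert h K))))"
proof -
  have alpha: "(\<Sum>s=0..t 0. v s * (\<Sum>K\<in>Pow {1..\<tau>}. JK J K * A s K))
      = (\<Sum>K\<in>Pow {1..\<tau>}. JK J K * (A 0 K - ((-1::real)^(card K + 1)) *\<^sub>R (\<Sum>s=1..t 0. v s * A s K)))"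
  proof -
    have "(\<Sum>s=0..t 0. v s * (\<Sum>K\<in>Pow {1..\<tau>}. JK J K * A s K))
        = (\<Sum>K\<in>Pow {1..\<tau>}. \<Sum>s=0..t 0. v s * JK J K * A s K)"
      by (simp add: sum_distrib_left mult.assoc sum.swap[of _ "{0..t 0}"])
    also have "\<dots> = (\<Sum>K\<in>Pow {1..\<tau>}. JK J K * (A 0 K - ((-1::real)^(card K + 1)) *\<^sub>R (\<Sum>s=1..t 0. v s * A s K)))"
    proof (rule sum.cong[OF refl])
      fix K assume K: "K \<in> Pow {1..\<tau>}"
      have "(\<Sum>s=0..t 0. v s * JK J K * A s K) = v 0 * JK J K * A 0 K + (\<Sum>s=Suc 0..t 0. v s * JK J K * A s K)"
        by (rule sum.atLeast_Suc_atMost) simp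
      also have "(\<Sum>s=Suc 0..t 0. v s * JK J K * A s K) = (\<Sum>s=1..t 0. (-1)^card K * (JK J K * (v s * A s K)))"
        by (rule sum.cong) (use vJK[OF J _, of _ K] K in \<open>auto simp: mult.assoc\<close>)
      also have "\<dots> = JK J K * ((-1)^card K * (\<Sum>s=1..t 0. v s * A s K))"
        by (simp add: sum_distrib_left m1pow_comm mult.assoc)
      finally show "(\<Sum>s=0..t 0. v s * JK J K * A s K) = JK J K * (A 0 K - ((-1::real)^(card K + 1)) *\<^sub>R (\<Sum>s=1..t 0. v s * A s K))"
        by (simp add: v0 scaleR_m1pow distrib_left right_diff_distrib)
    qed
    finally show ?thesis .
  qed
  have beta: "(\<Sum>u=1..\<tau>. J u * (\<Sum>K\<in>Pow {1..\<tau>}. JK J K * B u K))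
      = (\<Sum>K\<in>Pow {1..\<tau>}. JK J K * (\<Sum>h=1..\<tau>. ((-1::real)^(card {k\<in>K. k \<le> h} + 1)) *\<^sub>R B h (if h \<in> K then K - {h} else insert h K)))"
  proof -
    have "(\<Sum>u=1..\<tau>. J u * (\<Sum>K\<in>Pow {1..\<tau>}. JK J K * B u K))
        = (\<Sum>u=1..\<tau>. \<Sum>K\<in>Pow {1..\<tau>}. (-1)^(card {k\<in>symd u K. k \<le> u} + 1) * JK J (symd u K) * B u K)"
    proof (rule sum.cong[OF refl])
      fix u assume u: "u \<in> {1..\<tau>}"
      show "J u * (\<Sum>K\<in>Pow {1..\<tau>}. JK J K * B u K) = (\<Sum>K\<in>Pow {1..\<tau>}. (-1)^(card {k\<in>symd u K. k \<le> u} + 1) * JK J (symd u K) * B u K)"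
        unfolding sum_distrib_left
        by (rule sum.cong[OF refl]) (use JJK[OF J u] in \<open>auto simp: mult.assoc[symmetric]\<close>)
    qed
    also have "\<dots> = (\<Sum>u=1..\<tau>. \<Sum>L\<in>Pow {1..\<tau>}. (-1)^(card {k\<in>L. k \<le> u} + 1) * JK J L * B u (symd u L))"
    proof (rule sum.cong[OF refl])
      fix u assume u: "u \<in> {1..\<tau>}"
      show "(\<Sum>K\<in>Pow {1..\<tau>}. (-1)^(card {k\<in>symd u K. k \<le> u} + 1) * JK J (symd u K) * B u K)
          = (\<Sum>L\<in>Pow {1..\<tau>}. (-1)^(card {k\<in>L. k \<le> u} + 1) * JK J L * B u (symd u L))"
        using sum_symd[OF u, of "\<lambda>L K. (-1)^(card {k\<in>L. k \<le> u} + 1) * JK J L * B u K"] by simp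
    qed
    also have "\<dots> = (\<Sum>L\<in>Pow {1..\<tau>}. \<Sum>u=1..\<tau>. JK J L * (((-1::real)^(card {k\<in>L. k \<le> u} + 1)) *\<^sub>R B u (symd u L)))"
      by (subst sum.swap) (simp add: scaleR_m1pow m1pow_comm mult.assoc)
    also have "\<dots> = (\<Sum>K\<in>Pow {1..\<tau>}. JK J K * (\<Sum>h=1..\<tau>. ((-1::real)^(card {k\<in>K. k \<le> h} + 1)) *\<^sub>R B h (if h \<in> K then K - {h} else insert h K)))"
      by (simp add: sum_distrib_left symd_def)
    finally show ?thesis .
  qed
  show ?thesis unfolding alpha beta by (simp add: sum.distrib[symmetric] distrib_left)
qed

end

context cs2 begin

lemma inj_I:
  assumes Z: "\<forall>J\<in>torus v t \<tau>. (\<Sum>K\<in>Pow {1..\<tau>}. JK J K * c K) = 0" and K0: "K0 \<subseteq> {1..\<tau>}"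
  shows "c K0 = 0"
proof -
  let ?f = "\<lambda>J K. JK J K * c K"
  have main: "\<forall>L\<subseteq>M. \<forall>J\<in>torus v t \<tau>. (\<Sum>K\<in>{K\<in>Pow {1..\<tau>}. K \<inter> M = L}. ?f J K) = 0"
    if "M \<subseteq> {1..\<tau>}" for M
  proof -
    have "finite M" using that finite_subset by blast
    then show ?thesis using that
    proof (induction M rule: finite_subset_induct)
      case empty
      have "{K\<in>Pow {1..\<tau>}. K \<inter> {} = {}} = Pow {1..\<tau>}" by auto
      then show ?case using Z by auto
    next
      case (insert h M)
      show ?case
      proof (intro allI impI ballI)
        fix L J assume L: "L \<subseteq> insert h M" and J: "J \<in> torus v t \<tau>"
        let ?L = "L - {h}"
        let ?S = "{K\<in>Pow {1..\<tau>}. K \<inter> M = ?L}"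
        let ?A = "{K\<in>?S. h \<in> K}"
        let ?B = "{K\<in>?S. h \<notin> K}"
        have L': "?L \<subseteq> M" using L by auto
        have fS: "finite ?S" by simp
        have split: "(\<Sum>K\<in>?S. g K) = (\<Sum>K\<in>?A. g K) + (\<Sum>K\<in>?B. g K)" for g :: "nat set \<Rightarrow> 'a"
        proof -
          have "?S = ?A \<union> ?B" "?A \<inter> ?B = {}" by auto
          then show ?thesis using fS by (metis (no_types, lifting) finite_Un sum.union_disjoint)
        qed
        have e1: "(\<Sum>K\<in>?A. ?f J K) + (\<Sum>K\<in>?B. ?f J K) = 0"
          using insert.IH L' J split[of "?f J"] by auto
        have "(\<Sum>K\<in>?A. ?f (J(h := - J h)) K) + (\<Sum>K\<in>?B. ?f (J(h := - J h)) K) = 0"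
          using insert.IH L' torus_flip[OF J, of h] split[of "?f (J(h := - J h))"] by auto
        moreover have "(\<Sum>K\<in>?A. ?f (J(h := - J h)) K) = - (\<Sum>K\<in>?A. ?f J K)"
          unfolding sum_negf[symmetric]
          by (intro sum.cong refl) (auto simp: JK_flip finite_subset[OF _ finite_atLeastAtMost])
        moreover have "(\<Sum>K\<in>?B. ?f (J(h := - J h)) K) = (\<Sum>K\<in>?B. ?f J K)"
          by (intro sum.cong refl) (auto simp: JK_flip finite_subset[OF _ finite_atLeastAtMost])
        ultimately have e2: "- (\<Sum>K\<in>?A. ?f J K) + (\<Sum>K\<in>?B. ?f J K) = 0" by simp
        have a0: "(\<Sum>K\<in>?A. ?f J K) = 0" and b0: "(\<Sum>K\<in>?B. ?f J K) = 0"
        proof -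
          have "2 *\<^sub>R (\<Sum>K\<in>?A. ?f J K) = 0" using e1 e2 by (simp add: scaleR_2 algebra_simps)
          then show a0: "(\<Sum>K\<in>?A. ?f J K) = 0" by simp
          then show "(\<Sum>K\<in>?B. ?f J K) = 0" using e1 by simp
        qed
        have eqset: "{K\<in>Pow {1..\<tau>}. K \<inter> insert h M = L} = (if h \<in> L then ?A else ?B)"
          using L insert.hyps by auto
        show "(\<Sum>K\<in>{K\<in>Pow {1..\<tau>}. K \<inter> insert h M = L}. ?f J K) = 0"
          unfolding eqset using a0 b0 by (cases "h \<in> L") (simp_all only: if_True if_False)
      qed
    qed
  qed
  have "{K\<in>Pow {1..\<tau>}. K \<inter> {1..\<tau>} = K0} = {K0}" using K0 by auto
  then have "JK (\<lambda>h. v (t h)) K0 * c K0 = 0" using main[of "{1..\<tau>}"] K0 torus_ne by auto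
  moreover have "\<forall>k\<in>K0. v (t k) * v (t k) = -1" using J_sq[OF torus_ne] K0 by auto
  ultimately show ?thesis using JK_cancel[of K0 "\<lambda>h. v (t h)" "c K0"] K0 finite_subset by blast
qed

end

lemma open_ev:
  assumes "openin (top_of_set S) D" "continuous (at x) P" "\<And>y. P y \<in> S" "P x \<in> D"
  shows "\<exists>U. open U \<and> x \<in> U \<and> (\<forall>y\<in>U. P y \<in> D)"
proof -
  obtain T where T: "open T" "D = S \<inter> T" using assms(1) unfolding openin_open by auto
  then have "P x \<in> T" using assms(4) by auto
  then obtain U where "open U" "x \<in> U" "\<forall>y\<in>U. P y \<in> T"
    using assms(2) T(1) unfolding continuous_at_open by blast
  then show ?thesis using T assms(3) by blast
qed

lemma bl_mult: "bounded_linear (\<lambda>x::'a::{real_algebra_1,euclidean_space}. c * x)"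
  unfolding linear_conv_bounded_linear[symmetric]
  by (rule linearI) (simp_all add: distrib_left)

lemma hvd_mult:
  fixes G :: "real \<Rightarrow> 'a::{real_algebra_1,euclidean_space}"
  shows "(G has_vector_derivative G') F \<Longrightarrow> ((\<lambda>r. c * G r) has_vector_derivative c * G') F"
  by (rule bounded_linear.has_vector_derivative[OF bl_mult])

lemma vd_local:
  fixes g :: "real \<Rightarrow> 'a::{real_algebra_1,euclidean_space}"
  assumes "finite I" "open U" "0 \<in> U" "\<And>r. r \<in> U \<Longrightarrow> g r = (\<Sum>K\<in>I. c K * G K r)"
    "\<And>K. K \<in> I \<Longrightarrow> (G K has_vector_derivative G' K) (at 0)"
  shows "(g has_vector_derivative (\<Sum>K\<in>I. c K * G' K)) (at 0)"
proof -
  have "((\<lambda>r. \<Sum>K\<in>I. c K * G K r) has_vector_derivative (\<Sum>K\<in>I. c K * G' K)) (at 0)"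
    by (rule has_vector_derivative_sum) (use assms(5) in \<open>auto intro: hvd_mult\<close>)
  then show ?thesis
    by (rule has_vector_derivative_transform_within_open[OF _ assms(2,3)]) (use assms(4) in auto)
qed

lemma hasA_deriv:
  "hasA v s G (a, b) \<Longrightarrow> ((\<lambda>r. G (a + r *\<^sub>R v s, b)) has_vector_derivative dA v s G (a, b)) (at 0)"
  unfolding hasA_def dA_def by (simp add: vector_derivative_works)

lemma hasB_deriv:
  "hasB h G (a, b) \<Longrightarrow> ((\<lambda>r. G (a, b(h := b h + r))) has_vector_derivative dB h G (a, b)) (at 0)"
  unfolding hasB_def dB_def by (simp add: vector_derivative_works)

lemma cont_upd: "continuous (at x) (\<lambda>r::real. (a, (b::nat \<Rightarrow> real)(u := b u + r)))"
proof -
  have "continuous_on UNIV (\<lambda>r::real. b(u := b u + r))"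
  proof (rule continuous_on_coordinatewise_then_product)
    fix i show "continuous_on UNIV (\<lambda>r::real. (b(u := b u + r)) i)"
      by (cases "i = u") (auto intro!: continuous_intros)
  qed
  then have "continuous (at x) (\<lambda>r::real. b(u := b u + r))"
    by (simp add: continuous_on_eq_continuous_at)
  then show ?thesis by (intro continuous_intros)
qed

locale cs3 = cs2 v N t \<tau> for v :: "nat \<Rightarrow> 'a::{real_algebra_1,euclidean_space}" and N t \<tau> +
  fixes D :: "'a stempt set"
  assumes D_open: "openin (top_of_set (Rlm v 0 (t 0) \<times> Rtau \<tau>)) D"
    and D_refl: "\<And>\<alpha> \<beta> h. (\<alpha>, \<beta>) \<in> D \<Longrightarrow> h \<in> {1..\<tau>} \<Longrightarrow> (\<alpha>, flip h \<beta>) \<in> D"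
begin

lemma D_sub: "(a, b) \<in> D \<Longrightarrow> a \<in> Rlm v 0 (t 0) \<and> b \<in> Rtau \<tau>"
  using openin_subset[OF D_open] by auto

lemma evA:
  assumes "(a, b) \<in> D" "s \<in> {0..t 0}"
  shows "\<exists>U. open U \<and> 0 \<in> U \<and> (\<forall>r\<in>U. (a + r *\<^sub>R v s, b) \<in> D)"
proof (rule open_ev[OF D_open])
  show "continuous (at 0) (\<lambda>r::real. (a + r *\<^sub>R v s, b))" by (intro continuous_intros)
  show "(a + (0::real) *\<^sub>R v s, b) \<in> D" using assms by simp
  fix r :: real
  have "a \<in> Rlm v 0 (t 0)" "b \<in> Rtau \<tau>" using D_sub assms(1) by auto
  moreover have "v s \<in> Rlm v 0 (t 0)" using assms(2) unfolding Rlm_def by (auto intro: span_base)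
  ultimately show "(a + r *\<^sub>R v s, b) \<in> Rlm v 0 (t 0) \<times> Rtau \<tau>"
    unfolding Rlm_def by (auto intro: span_add span_scale)
qed

lemma evB:
  assumes "(a, b) \<in> D" "u \<in> {1..\<tau>}"
  shows "\<exists>U. open U \<and> 0 \<in> U \<and> (\<forall>r\<in>U. (a, b(u := b u + r)) \<in> D)"
proof (rule open_ev[OF D_open])
  show "continuous (at 0) (\<lambda>r::real. (a, b(u := b u + r)))" by (rule cont_upd)
  show "(a, b(u := b u + (0::real))) \<in> D" using assms by simp
  fix r :: real
  have "a \<in> Rlm v 0 (t 0)" "b \<in> Rtau \<tau>" using D_sub assms(1) by auto
  then show "(a, b(u := b u + r)) \<in> Rlm v 0 (t 0) \<times> Rtau \<tau>"
    using assms(2) unfolding Rtau_def by auto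
qed

lemma betaJ_upd:
  assumes "u \<in> {1..\<tau>}"
  shows "betaJ \<tau> (b(u := b u + r)) J = betaJ \<tau> b J + r *\<^sub>R J u"
proof -
  have "betaJ \<tau> (b(u := b u + r)) J = (\<Sum>h=1..\<tau>. b h *\<^sub>R J h + (if h = u then r *\<^sub>R J h else 0))"
    unfolding betaJ_def by (intro sum.cong refl) (auto simp: scaleR_add_left)
  also have "\<dots> = betaJ \<tau> b J + r *\<^sub>R J u"
    using assms unfolding betaJ_def by (simp add: sum.distrib)
  finally show ?thesis .
qed

lemma dd_A:
  assumes ind: "\<forall>a b. (a, b) \<in> D \<longrightarrow> f (a + betaJ \<tau> b J) = (\<Sum>K\<in>Pow {1..\<tau>}. JK J K * F K (a, b))"
    and z: "(a, b) \<in> D" and J: "J \<in> torus v t \<tau>"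
    and s: "s \<in> {0..t 0}" and h: "\<And>K. K \<subseteq> {1..\<tau>} \<Longrightarrow> hasA v s (F K) (a, b)"
  shows "hasd f (v s) (a + betaJ \<tau> b J)"
    "dd f (v s) (a + betaJ \<tau> b J) = (\<Sum>K\<in>Pow {1..\<tau>}. JK J K * dA v s (F K) (a, b))"
proof -
  obtain U where U: "open U" "0 \<in> U" "\<forall>r\<in>U. (a + r *\<^sub>R v s, b) \<in> D" using evA[OF z s] by blast
  have "((\<lambda>r. f (a + betaJ \<tau> b J + r *\<^sub>R v s)) has_vector_derivative
        (\<Sum>K\<in>Pow {1..\<tau>}. JK J K * dA v s (F K) (a, b))) (at 0)"
  proof (rule vd_local[OF _ U(1,2)])
    fix r assume "r \<in> U"
    then have "f ((a + r *\<^sub>R v s) + betaJ \<tau> b J) = (\<Sum>K\<in>Pow {1..\<tau>}. JK J K * F K (a + r *\<^sub>R v s, b))"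
      using ind U(3) by blast
    then show "f (a + betaJ \<tau> b J + r *\<^sub>R v s) = (\<Sum>K\<in>Pow {1..\<tau>}. JK J K * F K (a + r *\<^sub>R v s, b))"
      by (simp add: algebra_simps)
  next
    fix K assume "K \<in> Pow {1..\<tau>}"
    then show "((\<lambda>r. F K (a + r *\<^sub>R v s, b)) has_vector_derivative dA v s (F K) (a, b)) (at 0)"
      by (intro hasA_deriv h) auto
  qed simp
  then show "hasd f (v s) (a + betaJ \<tau> b J)"
    "dd f (v s) (a + betaJ \<tau> b J) = (\<Sum>K\<in>Pow {1..\<tau>}. JK J K * dA v s (F K) (a, b))"
    unfolding hasd_def dd_def by (auto intro: differentiableI_vector vector_derivative_at)
qed

lemma dd_B:
  assumes ind: "\<forall>a b. (a, b) \<in> D \<longrightarrow> f (a + betaJ \<tau> b J) = (\<Sum>K\<in>Pow {1..\<tau>}. JK J K * F K (a, b))"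
    and z: "(a, b) \<in> D" and J: "J \<in> torus v t \<tau>"
    and u: "u \<in> {1..\<tau>}" and h: "\<And>K. K \<subseteq> {1..\<tau>} \<Longrightarrow> hasB u (F K) (a, b)"
  shows "hasd f (J u) (a + betaJ \<tau> b J)"
    "dd f (J u) (a + betaJ \<tau> b J) = (\<Sum>K\<in>Pow {1..\<tau>}. JK J K * dB u (F K) (a, b))"
proof -
  obtain U where U: "open U" "0 \<in> U" "\<forall>r\<in>U. (a, b(u := b u + r)) \<in> D" using evB[OF z u] by blast
  have "((\<lambda>r. f (a + betaJ \<tau> b J + r *\<^sub>R J u)) has_vector_derivative
        (\<Sum>K\<in>Pow {1..\<tau>}. JK J K * dB u (F K) (a, b))) (at 0)"
  proof (rule vd_local[OF _ U(1,2)])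
    fix r assume "r \<in> U"
    then have "f (a + betaJ \<tau> (b(u := b u + r)) J) = (\<Sum>K\<in>Pow {1..\<tau>}. JK J K * F K (a, b(u := b u + r)))"
      using ind U(3) by blast
    then show "f (a + betaJ \<tau> b J + r *\<^sub>R J u) = (\<Sum>K\<in>Pow {1..\<tau>}. JK J K * F K (a, b(u := b u + r)))"
    proof -
      have e: "a + betaJ \<tau> b J + r *\<^sub>R J u = a + betaJ \<tau> (b(u := b u + r)) J"
        using betaJ_upd[OF u, of b r J] by (simp add: add.assoc)
      show ?thesis using \<open>f (a + betaJ \<tau> (b(u := b u + r)) J) = _\<close> by (simp only: e)
    qed
  next
    fix K assume "K \<in> Pow {1..\<tau>}"
    then show "((\<lambda>r. F K (a, b(u := b u + r))) has_vector_derivative dB u (F K) (a, b)) (at 0)"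
      by (intro hasB_deriv h) auto
  qed simp
  then show "hasd f (J u) (a + betaJ \<tau> b J)"
    "dd f (J u) (a + betaJ \<tau> b J) = (\<Sum>K\<in>Pow {1..\<tau>}. JK J K * dB u (F K) (a, b))"
    unfolding hasd_def dd_def by (auto intro: differentiableI_vector vector_derivative_at)
qed

lemma indJ: "induces v t \<tau> D F f \<Longrightarrow> J \<in> torus v t \<tau> \<Longrightarrow>
   \<forall>a b. (a, b) \<in> D \<longrightarrow> f (a + betaJ \<tau> b J) = (\<Sum>K\<in>Pow {1..\<tau>}. JK J K * F K (a, b))"
  unfolding induces_def by blast

lemma induces_A:
  assumes "induces v t \<tau> D F f" "s \<in> {0..t 0}" "\<And>K z. K \<subseteq> {1..\<tau>} \<Longrightarrow> z \<in> D \<Longrightarrow> hasA v s (F K) z"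
  shows "induces v t \<tau> D (\<lambda>K. dA v s (F K)) (dd f (v s))"
  unfolding induces_def
proof (intro allI impI)
  fix a b J assume ab: "(a, b) \<in> D" and J: "J \<in> torus v t \<tau>"
  show "dd f (v s) (a + betaJ \<tau> b J) = (\<Sum>K\<in>Pow {1..\<tau>}. JK J K * dA v s (F K) (a, b))"
    by (rule dd_A(2)[OF indJ[OF assms(1) J] ab J assms(2)]) (use assms(3) ab in auto)
qed

lemma induces_B:
  assumes "induces v t \<tau> D F f" "u \<in> {1..\<tau>}" "\<And>K z. K \<subseteq> {1..\<tau>} \<Longrightarrow> z \<in> D \<Longrightarrow> hasB u (F K) z"
    "J \<in> torus v t \<tau>"
  shows "\<forall>a b. (a, b) \<in> D \<longrightarrow>
     dd f (J u) (a + betaJ \<tau> b J) = (\<Sum>K\<in>Pow {1..\<tau>}. JK J K * dB u (F K) (a, b))"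
proof (intro allI impI)
  fix a b assume ab: "(a, b) \<in> D"
  show "dd f (J u) (a + betaJ \<tau> b J) = (\<Sum>K\<in>Pow {1..\<tau>}. JK J K * dB u (F K) (a, b))"
    by (rule dd_B(2)[OF indJ[OF assms(1,4)] ab assms(4) assms(2)]) (use assms(3) ab in auto)
qed

end

context cs3 begin

lemma flips_D:
  assumes "(a, b) \<in> D" "S \<subseteq> {1..\<tau>}"
  shows "(a, \<lambda>h. if h \<in> S then - b h else b h) \<in> D"
proof -
  have "finite S" using assms(2) finite_subset by blast
  then show ?thesis using assms(2)
  proof (induction S rule: finite_subset_induct)
    case empty then show ?case using assms(1) by simp
  next
    case (insert h S)
    have "(\<lambda>i. if i \<in> insert h S then - b i else b i) = flip h (\<lambda>i. if i \<in> S then - b i else b i)"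
      using insert.hyps unfolding flip_def by (auto simp: fun_eq_iff)
    then show ?case using D_refl[OF insert.IH insert.hyps(2)] by simp
  qed
qed

definition P :: "nat \<Rightarrow> 'a \<Rightarrow> 'a" where
  "P h y = (\<Sum>s\<in>blk h. inner y (v s) *\<^sub>R v s)"

lemma P_linear: "linear (P h)"
  unfolding P_def
  by (rule linearI) (simp_all add: inner_add_left scaleR_add_left sum.distrib scaleR_sum_right)

lemma P_alpha:
  assumes "h \<in> {1..\<tau>}" "y \<in> span (v ` {0..t 0})"
  shows "P h y = 0"
proof -
  have "inner y (v s) = 0" if "s \<in> blk h" for s
  proof (rule orth_v[OF _ _ _ assms(2)])
    show "{0..t 0} \<subseteq> {..N}" using t_le[of 0 \<tau>] t_last by auto
    show "s \<le> N" "s \<notin> {0..t 0}" using blk_props(1)[OF assms(1)] blk_props(2)[OF assms(1), of s] that by auto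
  qed
  then show ?thesis unfolding P_def by simp
qed

lemma P_J:
  assumes "J \<in> torus v t \<tau>" "h \<in> {1..\<tau>}" "g \<in> {1..\<tau>}"
  shows "P h (J g) = (if g = h then J h else 0)"
proof (cases "g = h")
  case True
  have "blk h \<subseteq> {..N}" using blk_props(1)[OF assms(2)] by auto
  then show ?thesis unfolding P_def using True reconstr[of "blk h" "J h"] blk_props(4)[OF assms(2)] torus_J(1)[OF assms(1,2)]
    by auto
next
  case False
  have "inner (J g) (v s) = 0" if "s \<in> blk h" for s
  proof (rule orth_v[OF _ _ _ torus_J(1)[OF assms(1,3)]])
    show "blk g \<subseteq> {..N}" using blk_props(1)[OF assms(3)] by auto
    show "s \<le> N" using blk_props(1)[OF assms(2)] that by auto
    show "s \<notin> blk g" using blk_disj[OF assms(2,3)] False that by auto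
  qed
  then show ?thesis unfolding P_def using False by simp
qed

lemma P_point:
  assumes "J \<in> torus v t \<tau>" "h \<in> {1..\<tau>}" "a \<in> span (v ` {0..t 0})"
  shows "P h (a + betaJ \<tau> b J) = b h *\<^sub>R J h"
proof -
  have "P h (a + betaJ \<tau> b J) = P h a + (\<Sum>g=1..\<tau>. b g *\<^sub>R P h (J g))"
    unfolding betaJ_def using P_linear[of h]
    by (simp add: linear_add linear_sum linear_scale)
  also have "\<dots> = (\<Sum>g=1..\<tau>. if g = h then b h *\<^sub>R J h else 0)"
  proof -
    have "(\<Sum>g=1..\<tau>. b g *\<^sub>R P h (J g)) = (\<Sum>g=1..\<tau>. if g = h then b h *\<^sub>R J h else 0)"
      by (rule sum.cong[OF refl]) (use P_J[OF assms(1,2)] in auto)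
    then show ?thesis using P_alpha[OF assms(2,3)] by simp
  qed
  also have "\<dots> = b h *\<^sub>R J h" using assms(2) by simp
  finally show ?thesis .
qed

lemma RJ_decomp:
  assumes J: "J \<in> torus v t \<tau>" and x: "x \<in> OmegaD v t \<tau> D" "x \<in> RJ v (t 0) \<tau> J"
  shows "\<exists>a b. (a, b) \<in> D \<and> x = a + betaJ \<tau> b J"
proof -
  obtain a' b' J' where ab': "(a', b') \<in> D" "J' \<in> torus v t \<tau>" "x = a' + betaJ \<tau> b' J'"
    using x(1) unfolding OmegaD_def by blast
  have a'span: "a' \<in> span (v ` {0..t 0})" using D_sub[OF ab'(1)] unfolding Rlm_def by auto
  obtain y z where yz: "x = y + z" "y \<in> span (v ` {0..t 0})" "z \<in> span (J ` {1..\<tau>})"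
    using x(2) unfolding RJ_def span_Un by blast
  obtain c where c: "z = (\<Sum>h\<in>{1..\<tau>}. c h *\<^sub>R J h)" using span_img_sum[OF _ yz(3)] by auto
  have xc: "x = y + betaJ \<tau> c J" using yz c unfolding betaJ_def by simp
  define S where "S = {h\<in>{1..\<tau>}. J' h \<noteq> J h}"
  define b where "b = (\<lambda>h. if h \<in> S then - b' h else b' h)"
  have bD: "(a', b) \<in> D" unfolding b_def by (rule flips_D[OF ab'(1)]) (auto simp: S_def)
  have comp: "b h *\<^sub>R J h = b' h *\<^sub>R J' h" if h: "h \<in> {1..\<tau>}" for h
  proof -
    have eq: "b' h *\<^sub>R J' h = c h *\<^sub>R J h"
      using P_point[OF ab'(2) h a'span, of b'] P_point[OF J h yz(2), of c] ab'(3) xc by simp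
    show ?thesis
    proof (cases "J' h = J h \<or> b' h = 0")
      case True
      then show ?thesis unfolding b_def S_def by auto
    next
      case False
      then have ne: "J' h \<noteq> J h" "b' h \<noteq> 0" by auto
      have "norm (b' h *\<^sub>R J' h) = norm (c h *\<^sub>R J h)" using eq by simp
      then have "\<bar>b' h\<bar> = \<bar>c h\<bar>" using torus_J(2)[OF J h] torus_J(2)[OF ab'(2) h] by simp
      then have "c h = b' h \<or> c h = - b' h" by linarith
      moreover have "c h \<noteq> b' h"
      proof
        assume "c h = b' h"
        then have "b' h *\<^sub>R J' h = b' h *\<^sub>R J h" using eq by simp
        then show False using ne by simp
      qed
      ultimately have "b' h *\<^sub>R J' h = b' h *\<^sub>R (- J h)" using eq by simp
      then have "J' h = - J h" using ne scaleR_cancel_left[of "b' h" "J' h" "- J h"] by simp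
      then show ?thesis unfolding b_def S_def using ne h by auto
    qed
  qed
  have "betaJ \<tau> b J = betaJ \<tau> b' J'" unfolding betaJ_def by (intro sum.cong refl comp) auto
  then show ?thesis using bD ab'(3) by metis
qed

end

lemma pair_small: "\<bar>a\<bar> \<le> r \<Longrightarrow> \<bar>b\<bar> \<le> r \<Longrightarrow> norm ((a::real), (b::real)) \<le> 2 * r"
  using norm_Pair_le[of a b] by simp

lemma clairaut_real:
  fixes \<phi> \<phi>1 \<phi>2 \<phi>12 \<phi>21 :: "real \<Rightarrow> real \<Rightarrow> real" and e :: real
  assumes e: "e > 0"
  and d1: "\<And>a b. (a,b) \<in> ball 0 e \<Longrightarrow> ((\<lambda>x. \<phi> x b) has_real_derivative \<phi>1 a b) (at a)"
  and d2: "\<And>a b. (a,b) \<in> ball 0 e \<Longrightarrow> ((\<lambda>y. \<phi> a y) has_real_derivative \<phi>2 a b) (at b)"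
  and d12: "\<And>a b. (a,b) \<in> ball 0 e \<Longrightarrow> ((\<lambda>y. \<phi>1 a y) has_real_derivative \<phi>12 a b) (at b)"
  and d21: "\<And>a b. (a,b) \<in> ball 0 e \<Longrightarrow> ((\<lambda>x. \<phi>2 x b) has_real_derivative \<phi>21 a b) (at a)"
  and c12: "continuous (at (0,0)) (\<lambda>p. \<phi>12 (fst p) (snd p))"
  and c21: "continuous (at (0,0)) (\<lambda>p. \<phi>21 (fst p) (snd p))"
  shows "\<phi>12 0 0 = \<phi>21 0 0"
proof -
  have inball: "(a, b) \<in> ball 0 e" if "0 \<le> a" "a \<le> h" "0 \<le> b" "b \<le> h" "h < e / 2" for a b h
  proof -
    have "norm (a, b) \<le> 2 * h" using pair_small[of a h b] that by simp
    then show ?thesis using that unfolding mem_ball_0 by simp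
  qed
  have key: "\<exists>p q. 0 < fst p \<and> fst p < h \<and> 0 < snd p \<and> snd p < h \<and>
                   0 < fst q \<and> fst q < h \<and> 0 < snd q \<and> snd q < h \<and>
                   \<phi>12 (fst p) (snd p) = \<phi>21 (fst q) (snd q)"
    if h: "0 < h" "h < e / 2" for h
  proof -
    define \<Delta> where "\<Delta> = \<phi> h h - \<phi> h 0 - \<phi> 0 h + \<phi> 0 0"
    have der1: "\<And>x. 0 \<le> x \<Longrightarrow> x \<le> h \<Longrightarrow> ((\<lambda>x. \<phi> x h - \<phi> x 0) has_real_derivative \<phi>1 x h - \<phi>1 x 0) (at x)"
      by (intro derivative_intros d1 inball) (use h in auto)
    obtain \<xi> where \<xi>: "0 < \<xi>" "\<xi> < h"
      "(\<phi> h h - \<phi> h 0) - (\<phi> 0 h - \<phi> 0 0) = (h - 0) * (\<phi>1 \<xi> h - \<phi>1 \<xi> 0)"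
      using MVT2[OF h(1) der1] by auto
    have der2: "\<And>y. 0 \<le> y \<Longrightarrow> y \<le> h \<Longrightarrow> ((\<lambda>y. \<phi>1 \<xi> y) has_real_derivative \<phi>12 \<xi> y) (at y)"
      by (intro d12 inball) (use h \<xi> in auto)
    obtain \<eta> where \<eta>: "0 < \<eta>" "\<eta> < h" "\<phi>1 \<xi> h - \<phi>1 \<xi> 0 = (h - 0) * \<phi>12 \<xi> \<eta>"
      using MVT2[OF h(1) der2] by auto
    have der3: "\<And>y. 0 \<le> y \<Longrightarrow> y \<le> h \<Longrightarrow> ((\<lambda>y. \<phi> h y - \<phi> 0 y) has_real_derivative \<phi>2 h y - \<phi>2 0 y) (at y)"
      by (intro derivative_intros d2 inball) (use h in auto)
    obtain \<eta>' where \<eta>': "0 < \<eta>'" "\<eta>' < h"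
      "(\<phi> h h - \<phi> 0 h) - (\<phi> h 0 - \<phi> 0 0) = (h - 0) * (\<phi>2 h \<eta>' - \<phi>2 0 \<eta>')"
      using MVT2[OF h(1) der3] by auto
    have der4: "\<And>x. 0 \<le> x \<Longrightarrow> x \<le> h \<Longrightarrow> ((\<lambda>x. \<phi>2 x \<eta>') has_real_derivative \<phi>21 x \<eta>') (at x)"
      by (intro d21 inball) (use h \<eta>' in auto)
    obtain \<xi>' where \<xi>': "0 < \<xi>'" "\<xi>' < h" "\<phi>2 h \<eta>' - \<phi>2 0 \<eta>' = (h - 0) * \<phi>21 \<xi>' \<eta>'"
      using MVT2[OF h(1) der4] by auto
    have "h * (h * \<phi>12 \<xi> \<eta>) = h * (h * \<phi>21 \<xi>' \<eta>')"
      using \<xi>(3) \<eta>(3) \<eta>'(3) \<xi>'(3) by (simp add: algebra_simps)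
    then have "\<phi>12 \<xi> \<eta> = \<phi>21 \<xi>' \<eta>'" using h by simp
    then show ?thesis using \<xi> \<eta> \<xi>' \<eta>'
      by (intro exI[of _ "(\<xi>, \<eta>)"] exI[of _ "(\<xi>', \<eta>')"]) auto
  qed
  show ?thesis
  proof (rule ccontr)
    assume ne: "\<phi>12 0 0 \<noteq> \<phi>21 0 0"
    define \<epsilon> where "\<epsilon> = \<bar>\<phi>12 0 0 - \<phi>21 0 0\<bar> / 2"
    have \<epsilon>: "\<epsilon> > 0" using ne unfolding \<epsilon>_def by simp
    obtain d1 where d1: "d1 > 0" "\<And>p. dist p (0,0) < d1 \<Longrightarrow> dist (\<phi>12 (fst p) (snd p)) (\<phi>12 0 0) < \<epsilon>"
      using c12 \<epsilon> unfolding continuous_at_eps_delta by fastforce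
    obtain d2 where d2: "d2 > 0" "\<And>p. dist p (0,0) < d2 \<Longrightarrow> dist (\<phi>21 (fst p) (snd p)) (\<phi>21 0 0) < \<epsilon>"
      using c21 \<epsilon> unfolding continuous_at_eps_delta by fastforce
    define h where "h = min (min d1 d2) e / 4"
    have h: "0 < h" "h < e / 2" "2 * h < d1" "2 * h < d2" using d1 d2 e unfolding h_def by auto
    obtain p q where pq: "0 < fst p" "fst p < h" "0 < snd p" "snd p < h"
      "0 < fst q" "fst q < h" "0 < snd q" "snd q < h" "\<phi>12 (fst p) (snd p) = \<phi>21 (fst q) (snd q)"
      using key[OF h(1,2)] by blast
    have "dist p (0,0) < d1"
    proof -
      have "norm (fst p, snd p) \<le> 2 * h" using pair_small[of "fst p" h "snd p"] pq by simp
      then show ?thesis using h by (simp add: dist_norm zero_prod_def[symmetric])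
    qed
    moreover have "dist q (0,0) < d2"
    proof -
      have "norm (fst q, snd q) \<le> 2 * h" using pair_small[of "fst q" h "snd q"] pq by simp
      then show ?thesis using h by (simp add: dist_norm zero_prod_def[symmetric])
    qed
    ultimately have "dist (\<phi>12 (fst p) (snd p)) (\<phi>12 0 0) < \<epsilon>" "dist (\<phi>21 (fst q) (snd q)) (\<phi>21 0 0) < \<epsilon>"
      using d1 d2 by auto
    then show False using pq(9) unfolding \<epsilon>_def dist_real_def by (simp add: abs_if split: if_splits)
  qed
qed

lemma dirA:
  assumes "hasA v s H (c + a *\<^sub>R v s, b)"
  shows "((\<lambda>x. inner (H (c + x *\<^sub>R v s, b)) i) has_real_derivative inner (dA v s H (c + a *\<^sub>R v s, b)) i) (at a)"
proof -
  have "((\<lambda>x. inner (H (c + a *\<^sub>R v s + x *\<^sub>R v s, b)) i) has_vector_derivative inner (dA v s H (c + a *\<^sub>R v s, b)) i) (at 0)"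
    by (rule bounded_linear.has_vector_derivative[OF bounded_linear_inner_left hasA_deriv[OF assms]])
  then have "((\<lambda>x. inner (H (c + (x + a) *\<^sub>R v s, b)) i) has_real_derivative inner (dA v s H (c + a *\<^sub>R v s, b)) i) (at 0)"
    unfolding has_real_derivative_iff_has_vector_derivative by (simp add: algebra_simps)
  then show ?thesis using DERIV_shift[of "\<lambda>x. inner (H (c + x *\<^sub>R v s, b)) i" _ 0 a] by simp
qed

lemma dirA2:
  assumes "hasA v s H (c + a *\<^sub>R v s + d, b)"
  shows "((\<lambda>x. inner (H (c + x *\<^sub>R v s + d, b)) i) has_real_derivative inner (dA v s H (c + a *\<^sub>R v s + d, b)) i) (at a)"
proof -
  have e: "c + x *\<^sub>R v s + d = (c + d) + x *\<^sub>R v s" for x by (simp add: algebra_simps)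
  show ?thesis using dirA[of v s H "c + d" a b i] assms unfolding e .
qed

context cs3 begin

lemma clairaut:
  fixes G :: "'a stempt \<Rightarrow> 'a"
  assumes z: "z \<in> D" and s: "s \<in> {0..t 0}" and r: "r \<in> {0..t 0}"
    and hs: "\<And>z. z \<in> D \<Longrightarrow> hasA v s G z" and hr: "\<And>z. z \<in> D \<Longrightarrow> hasA v r G z"
    and hrs: "\<And>z. z \<in> D \<Longrightarrow> hasA v r (dA v s G) z" and hsr: "\<And>z. z \<in> D \<Longrightarrow> hasA v s (dA v r G) z"
    and c1: "continuous_on D (dA v r (dA v s G))" and c2: "continuous_on D (dA v s (dA v r G))"
  shows "dA v r (dA v s G) z = dA v s (dA v r G) z"
proof -
  obtain \<alpha> \<beta> where zab: "z = (\<alpha>, \<beta>)" by (cases z)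
  define Q where "Q = (\<lambda>p::real \<times> real. (\<alpha> + fst p *\<^sub>R v s + snd p *\<^sub>R v r, \<beta>))"
  have Qc: "continuous_on UNIV Q" unfolding Q_def by (intro continuous_intros)
  have "\<exists>U. open U \<and> (0,0) \<in> U \<and> (\<forall>y\<in>U. Q y \<in> D)"
  proof (rule open_ev[OF D_open])
    show "continuous (at (0,0)) Q" using Qc by (simp add: continuous_on_eq_continuous_at)
    show "Q (0,0) \<in> D" using z zab unfolding Q_def by simp
    fix y
    have a1: "\<alpha> \<in> span (v ` {0..t 0})" and b1: "\<beta> \<in> Rtau \<tau>" using D_sub z zab unfolding Rlm_def by auto
    have a2: "v s \<in> span (v ` {0..t 0})" "v r \<in> span (v ` {0..t 0})" using s r by (auto intro: span_base)
    have "\<alpha> + fst y *\<^sub>R v s + snd y *\<^sub>R v r \<in> Rlm v 0 (t 0)"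
      unfolding Rlm_def by (rule span_add[OF span_add[OF a1 span_scale[OF a2(1)]] span_scale[OF a2(2)]])
    note this b1
    then show "Q y \<in> Rlm v 0 (t 0) \<times> Rtau \<tau>" unfolding Q_def by simp
  qed
  then obtain U where U: "open U" "(0,0) \<in> U" "\<forall>y\<in>U. Q y \<in> D" by blast
  obtain e where e: "e > 0" "ball (0,0) e \<subseteq> U" using U(1,2) open_contains_ball by blast
  have inD: "(\<alpha> + a *\<^sub>R v s + b *\<^sub>R v r, \<beta>) \<in> D" if "(a, b) \<in> ball 0 e" for a b
    using that e(2) U(3) unfolding Q_def zero_prod_def by force
  have contQ: "continuous (at (0,0)) (\<lambda>p. H (Q p))" if "continuous_on D H" for H :: "'a stempt \<Rightarrow> 'a"
  proof -
    have "continuous_on (ball (0,0) e) (\<lambda>p. H (Q p))"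
      by (rule continuous_on_compose2[OF that continuous_on_subset[OF Qc]])
         (use e U in auto)
    then show ?thesis using e(1) by (simp add: continuous_on_eq_continuous_at)
  qed
  have "inner (dA v r (dA v s G) z) i = inner (dA v s (dA v r G) z) i" for i
  proof -
    let ?p = "\<lambda>a b. (\<alpha> + a *\<^sub>R v s + b *\<^sub>R v r, \<beta>)"
    have "(\<lambda>a b. inner (dA v r (dA v s G) (?p a b)) i) 0 0 = (\<lambda>a b. inner (dA v s (dA v r G) (?p a b)) i) 0 0"
    proof (rule clairaut_real[of e "\<lambda>a b. inner (G (?p a b)) i" "\<lambda>a b. inner (dA v s G (?p a b)) i"
          "\<lambda>a b. inner (dA v r G (?p a b)) i" "\<lambda>a b. inner (dA v r (dA v s G) (?p a b)) i"
          "\<lambda>a b. inner (dA v s (dA v r G) (?p a b)) i", OF e(1)])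
      fix a b :: real assume ab: "(a, b) \<in> ball 0 e"
      show "((\<lambda>x. inner (G (?p x b)) i) has_real_derivative inner (dA v s G (?p a b)) i) (at a)"
        by (rule dirA2[OF hs[OF inD[OF ab]]])
      show "((\<lambda>y. inner (G (?p a y)) i) has_real_derivative inner (dA v r G (?p a b)) i) (at b)"
        by (rule dirA[OF hr[OF inD[OF ab]]])
      show "((\<lambda>y. inner (dA v s G (?p a y)) i) has_real_derivative inner (dA v r (dA v s G) (?p a b)) i) (at b)"
        by (rule dirA[OF hrs[OF inD[OF ab]]])
      show "((\<lambda>x. inner (dA v r G (?p x b)) i) has_real_derivative inner (dA v s (dA v r G) (?p a b)) i) (at a)"
        by (rule dirA2[OF hsr[OF inD[OF ab]]])
    next
      show "continuous (at (0, 0)) (\<lambda>p. inner (dA v r (dA v s G) (?p (fst p) (snd p))) i)"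
        using contQ[OF c1] unfolding Q_def by (intro continuous_intros)
      show "continuous (at (0, 0)) (\<lambda>p. inner (dA v s (dA v r G) (?p (fst p) (snd p))) i)"
        using contQ[OF c2] unfolding Q_def by (intro continuous_intros)
    qed
    then show ?thesis using zab by simp
  qed
  then show ?thesis by (rule euclidean_eqI)
qed

end

lemma Cp2_unfold:
  assumes "Cp v t0 \<tau> D 2 G" "s \<in> {0..t0}" "r \<in> {0..t0}"
  shows "\<forall>z\<in>D. hasA v s G z" "\<forall>z\<in>D. hasA v r (dA v s G) z" "continuous_on D (dA v r (dA v s G))"
  using assms by (auto simp: numeral_2_eq_2)

lemma Cp2_unfoldB:
  assumes "Cp v t0 \<tau> D 2 G" "h \<in> {1..\<tau>}"
  shows "\<forall>z\<in>D. hasB h G z" "\<forall>z\<in>D. hasB h (dB h G) z"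
  using assms by (auto simp: numeral_2_eq_2)

lemma hvd_scale:
  "(G has_vector_derivative G') F \<Longrightarrow> ((\<lambda>r. c *\<^sub>R G r) has_vector_derivative c *\<^sub>R G') F"
  by (rule bounded_linear.has_vector_derivative[OF bounded_linear_scaleR_right])

lemma dA_lin:
  fixes H0 :: "'a::{real_algebra_1,euclidean_space} stempt \<Rightarrow> 'a"
  assumes "finite R" "hasA v s H0 z" "\<And>r. r \<in> R \<Longrightarrow> hasA v s (Hr r) z"
  shows "dA v s (\<lambda>z. H0 z - c *\<^sub>R (\<Sum>r\<in>R. w r * Hr r z)) z = dA v s H0 z - c *\<^sub>R (\<Sum>r\<in>R. w r * dA v s (Hr r) z)"
proof -
  obtain a b where z: "z = (a, b)" by (cases z)
  have "((\<lambda>x. H0 (a + x *\<^sub>R v s, b) - c *\<^sub>R (\<Sum>r\<in>R. w r * Hr r (a + x *\<^sub>R v s, b))) has_vector_derivative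
         dA v s H0 (a, b) - c *\<^sub>R (\<Sum>r\<in>R. w r * dA v s (Hr r) (a, b))) (at 0)"
    using assms z
    by (intro has_vector_derivative_diff hvd_scale has_vector_derivative_sum hvd_mult hasA_deriv) auto
  then show ?thesis unfolding z dA_def by (simp add: vector_derivative_at)
qed

context cs3 begin

lemma lap_identity:
  fixes G :: "'a stempt \<Rightarrow> 'a"
  assumes z: "z \<in> D" and G: "Cp v (t 0) \<tau> D 2 G"
  shows "dbar_alpha v (t 0) 0 (dbar_alpha v (t 0) 1 G) z = (\<Sum>s=0..t 0. dA v s (dA v s G) z)"
proof -
  let ?R = "{1..t 0}"
  define M where "M s r = dA v s (dA v r G) z" for s r
  have hA: "\<And>s z. s \<in> {0..t 0} \<Longrightarrow> z \<in> D \<Longrightarrow> hasA v s G z"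
    using Cp2_unfold(1)[OF G] by blast
  have hAA: "\<And>s r z. s \<in> {0..t 0} \<Longrightarrow> r \<in> {0..t 0} \<Longrightarrow> z \<in> D \<Longrightarrow> hasA v r (dA v s G) z"
    using Cp2_unfold(2)[OF G] by blast
  have cAA: "\<And>s r. s \<in> {0..t 0} \<Longrightarrow> r \<in> {0..t 0} \<Longrightarrow> continuous_on D (dA v r (dA v s G))"
    using Cp2_unfold(3)[OF G] by blast
  have sym: "M s r = M r s" if "s \<in> {0..t 0}" "r \<in> {0..t 0}" for s r
    unfolding M_def
    by (rule clairaut[OF z that(2) that(1)]) (use that hA hAA cAA in auto)
  have t0N: "t 0 \<le> N" using t_le[of 0 \<tau>] t_last by auto
  have H1: "dA v s (dbar_alpha v (t 0) 1 G) z = M s 0 + (\<Sum>r\<in>?R. v r * M s r)" if s: "s \<in> {0..t 0}" for s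
  proof -
    have "dA v s (dbar_alpha v (t 0) 1 G) z = dA v s (dA v 0 G) z - ((-1::real)^1) *\<^sub>R (\<Sum>r\<in>?R. v r * dA v s (dA v r G) z)"
      unfolding dbar_alpha_def
      by (rule dA_lin) (use s hAA z in auto)
    then show ?thesis unfolding M_def by simp
  qed
  have "dbar_alpha v (t 0) 0 (dbar_alpha v (t 0) 1 G) z
      = (M 0 0 + (\<Sum>r\<in>?R. v r * M 0 r)) - (\<Sum>s\<in>?R. v s * (M s 0 + (\<Sum>r\<in>?R. v r * M s r)))"
    unfolding dbar_alpha_def[of v "t 0" 0] using H1 by simp
  also have "\<dots> = M 0 0 - (\<Sum>s\<in>?R. \<Sum>r\<in>?R. v s * (v r * M s r))"
  proof -
    have "(\<Sum>r\<in>?R. v r * M 0 r) = (\<Sum>s\<in>?R. v s * M s 0)"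
      using sym by (intro sum.cong) auto
    then show ?thesis by (simp add: distrib_left sum.distrib sum_distrib_left)
  qed
  also have "(\<Sum>s\<in>?R. \<Sum>r\<in>?R. v s * (v r * M s r)) = - (\<Sum>s\<in>?R. M s s)"
  proof -
    let ?X = "(\<Sum>s\<in>?R. \<Sum>r\<in>?R. v s * (v r * M s r))"
    have X2: "?X = (\<Sum>s\<in>?R. \<Sum>r\<in>?R. v r * (v s * M s r))"
    proof -
      have "?X = (\<Sum>s\<in>?R. \<Sum>r\<in>?R. v s * (v r * M r s))"
        using sym by (intro sum.cong refl) auto
      also have "\<dots> = (\<Sum>r\<in>?R. \<Sum>s\<in>?R. v s * (v r * M r s))" by (rule sum.swap)
      finally show ?thesis .
    qed
    have "?X + ?X = (\<Sum>s\<in>?R. \<Sum>r\<in>?R. (v s * v r + v r * v s) * M s r)"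
      apply (subst (2) X2)
      by (simp add: sum.distrib[symmetric] distrib_right mult.assoc)
    also have "\<dots> = (\<Sum>s\<in>?R. \<Sum>r\<in>?R. if r = s then (-2::real) *\<^sub>R M s s else 0)"
    proof (intro sum.cong refl)
      fix s r assume "s \<in> ?R" "r \<in> ?R"
      then have sr: "s \<in> {1..N}" "r \<in> {1..N}" using t0N by auto
      have "v s * v r + v r * v s = (-2 * inner (v s) (v r)) *\<^sub>R 1"
        by (rule anti_span) (use sr in \<open>auto intro: span_base\<close>)
      then show "(v s * v r + v r * v s) * M s r = (if r = s then (-2::real) *\<^sub>R M s s else 0)"
        using vON[of s r] sr by auto
    qed
    also have "\<dots> = (-2::real) *\<^sub>R (\<Sum>s\<in>?R. M s s)" by (simp add: scaleR_sum_right)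
    finally have "2 *\<^sub>R ?X = 2 *\<^sub>R (- (\<Sum>s\<in>?R. M s s))" by (simp add: scaleR_2)
    then show ?thesis using scaleR_cancel_left[of 2 ?X "- (\<Sum>s\<in>?R. M s s)"] by simp
  qed
  also have "M 0 0 - - (\<Sum>s\<in>?R. M s s) = (\<Sum>s=0..t 0. M s s)"
    by (simp add: sum.atLeast_Suc_atMost)
  finally show ?thesis unfolding M_def .
qed

end

context cs3 begin

lemma Cp1_unfold:
  assumes "Cp v (t 0) \<tau> D 1 G"
  shows "\<And>s z. s \<in> {0..t 0} \<Longrightarrow> z \<in> D \<Longrightarrow> hasA v s G z"
    "\<And>h z. h \<in> {1..\<tau>} \<Longrightarrow> z \<in> D \<Longrightarrow> hasB h G z"
  using assms unfolding One_nat_def Cp.simps(2) by blast+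

lemma Cp2_Cp1: "Cp v (t 0) \<tau> D 2 G \<Longrightarrow> Cp v (t 0) \<tau> D 1 G"
  unfolding numeral_2_eq_2 One_nat_def Cp.simps(2) Cp.simps(1) by blast

lemma point_in:
  assumes "(a, b) \<in> D" "J \<in> torus v t \<tau>"
  shows "a + betaJ \<tau> b J \<in> OmegaD v t \<tau> D \<inter> RJ v (t 0) \<tau> J"
proof -
  let ?S = "v ` {0..t 0} \<union> J ` {1..\<tau>}"
  have "a \<in> span (v ` {0..t 0})" using D_sub[OF assms(1)] unfolding Rlm_def by blast
  then have a: "a \<in> span ?S" using span_mono[of "v ` {0..t 0}" ?S] by blast
  have "b h *\<^sub>R J h \<in> span ?S" if "h \<in> {1..\<tau>}" for h
    by (rule span_scale, rule span_base) (use that in blast)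
  then have "betaJ \<tau> b J \<in> span ?S" unfolding betaJ_def by (rule span_sum)
  then have "a + betaJ \<tau> b J \<in> RJ v (t 0) \<tau> J" unfolding RJ_def by (rule span_add[OF a])
  moreover have "a + betaJ \<tau> b J \<in> OmegaD v t \<tau> D" unfolding OmegaD_def using assms by blast
  ultimately show ?thesis by blast
qed

lemma reg_point:
  assumes F: "\<And>K. K \<subseteq> {1..\<tau>} \<Longrightarrow> Cp v (t 0) \<tau> D 1 (F K)" and ind: "induces v t \<tau> D F f"
    and ab: "(a, b) \<in> D" and J: "J \<in> torus v t \<tau>"
  shows "\<forall>s\<in>{0..t 0}. hasd f (v s) (a + betaJ \<tau> b J)"
    "\<forall>u\<in>{1..\<tau>}. hasd f (J u) (a + betaJ \<tau> b J)"
    "(\<Sum>s=0..t 0. v s * dd f (v s) (a + betaJ \<tau> b J)) + (\<Sum>u=1..\<tau>. J u * dd f (J u) (a + betaJ \<tau> b J))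
       = (\<Sum>K\<in>Pow {1..\<tau>}. JK J K * dbarT v (t 0) \<tau> F K (a, b))"
proof -
  note iJ = indJ[OF ind J]
  have hA: "\<And>s K. s \<in> {0..t 0} \<Longrightarrow> K \<subseteq> {1..\<tau>} \<Longrightarrow> hasA v s (F K) (a, b)"
    using Cp1_unfold(1)[OF F] ab by blast
  have hB: "\<And>u K. u \<in> {1..\<tau>} \<Longrightarrow> K \<subseteq> {1..\<tau>} \<Longrightarrow> hasB u (F K) (a, b)"
    using Cp1_unfold(2)[OF F] ab by blast
  show "\<forall>s\<in>{0..t 0}. hasd f (v s) (a + betaJ \<tau> b J)"
    using dd_A(1)[OF iJ ab J] hA by blast
  show "\<forall>u\<in>{1..\<tau>}. hasd f (J u) (a + betaJ \<tau> b J)"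
    using dd_B(1)[OF iJ ab J] hB by blast
  have "(\<Sum>s=0..t 0. v s * dd f (v s) (a + betaJ \<tau> b J)) + (\<Sum>u=1..\<tau>. J u * dd f (J u) (a + betaJ \<tau> b J))
     = (\<Sum>s=0..t 0. v s * (\<Sum>K\<in>Pow {1..\<tau>}. JK J K * dA v s (F K) (a, b)))
       + (\<Sum>u=1..\<tau>. J u * (\<Sum>K\<in>Pow {1..\<tau>}. JK J K * dB u (F K) (a, b)))"
    using dd_A(2)[OF iJ ab J] dd_B(2)[OF iJ ab J] hA hB by (intro arg_cong2[where f = "(+)"] sum.cong) auto
  also have "\<dots> = (\<Sum>K\<in>Pow {1..\<tau>}. JK J K * dbarT v (t 0) \<tau> F K (a, b))"
    unfolding dbar_identity[OF J] dbarT_def dbar_alpha_def by simp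
  finally show "(\<Sum>s=0..t 0. v s * dd f (v s) (a + betaJ \<tau> b J)) + (\<Sum>u=1..\<tau>. J u * dd f (J u) (a + betaJ \<tau> b J))
       = (\<Sum>K\<in>Pow {1..\<tau>}. JK J K * dbarT v (t 0) \<tau> F K (a, b))" .
qed

lemma part1:
  assumes FS: "F \<in> Stem v (t 0) \<tau> D 1" and ind: "induces v t \<tau> D F f"
  shows "T_regular v t \<tau> D f \<longleftrightarrow> Ivanishes v t \<tau> D (dbarT v (t 0) \<tau> F)"
proof -
  have F: "\<And>K. K \<subseteq> {1..\<tau>} \<Longrightarrow> Cp v (t 0) \<tau> D 1 (F K)" using FS unfolding Stem_def by auto
  show ?thesis
  proof
    assume R: "T_regular v t \<tau> D f"
    show "Ivanishes v t \<tau> D (dbarT v (t 0) \<tau> F)"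
      unfolding Ivanishes_def
    proof (intro allI impI)
      fix a b J assume ab: "(a, b) \<in> D" and J: "J \<in> torus v t \<tau>"
      have "(\<Sum>s=0..t 0. v s * dd f (v s) (a + betaJ \<tau> b J)) + (\<Sum>u=1..\<tau>. J u * dd f (J u) (a + betaJ \<tau> b J)) = 0"
        using R point_in[OF ab J] J unfolding T_regular_def by blast
      then show "(\<Sum>K\<in>Pow {1..\<tau>}. JK J K * dbarT v (t 0) \<tau> F K (a, b)) = 0"
        using reg_point(3)[OF F ind ab J] by simp
    qed
  next
    assume I: "Ivanishes v t \<tau> D (dbarT v (t 0) \<tau> F)"
    show "T_regular v t \<tau> D f"
      unfolding T_regular_def
    proof (intro ballI)
      fix J x assume J: "J \<in> torus v t \<tau>" and x: "x \<in> OmegaD v t \<tau> D \<inter> RJ v (t 0) \<tau> J"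
      then obtain a b where ab: "(a, b) \<in> D" "x = a + betaJ \<tau> b J" using RJ_decomp by blast
      show "(\<forall>s\<in>{0..t 0}. hasd f (v s) x) \<and> (\<forall>u\<in>{1..\<tau>}. hasd f (J u) x) \<and>
          (\<Sum>s=0..t 0. v s * dd f (v s) x) + (\<Sum>u=1..\<tau>. J u * dd f (J u) x) = 0"
      proof -
        have I0: "(\<Sum>K\<in>Pow {1..\<tau>}. JK J K * dbarT v (t 0) \<tau> F K (a, b)) = 0"
          using I ab(1) J unfolding Ivanishes_def by blast
        have "(\<Sum>s=0..t 0. v s * dd f (v s) x) + (\<Sum>u=1..\<tau>. J u * dd f (J u) x) = 0"
          using reg_point(3)[OF F ind ab(1) J] I0 ab(2) by simp
        then show ?thesis using reg_point(1,2)[OF F ind ab(1) J] ab(2) by simp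
      qed
    qed
  qed
qed

lemma harm_point:
  assumes F: "\<And>K. K \<subseteq> {1..\<tau>} \<Longrightarrow> Cp v (t 0) \<tau> D 2 (F K)" and ind: "induces v t \<tau> D F f"
    and ab: "(a, b) \<in> D" and J: "J \<in> torus v t \<tau>"
  shows "\<forall>s\<in>{0..t 0}. hasd f (v s) (a + betaJ \<tau> b J) \<and> hasd (dd f (v s)) (v s) (a + betaJ \<tau> b J)"
    "\<forall>u\<in>{1..\<tau>}. hasd f (J u) (a + betaJ \<tau> b J) \<and> hasd (dd f (J u)) (J u) (a + betaJ \<tau> b J)"
    "(\<Sum>s=0..t 0. dd (dd f (v s)) (v s) (a + betaJ \<tau> b J)) + (\<Sum>u=1..\<tau>. dd (dd f (J u)) (J u) (a + betaJ \<tau> b J))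
       = (\<Sum>K\<in>Pow {1..\<tau>}. JK J K * LapT v (t 0) \<tau> F K (a, b))"
proof -
  note iJ = indJ[OF ind J]
  have hA: "\<And>s K z. s \<in> {0..t 0} \<Longrightarrow> K \<subseteq> {1..\<tau>} \<Longrightarrow> z \<in> D \<Longrightarrow> hasA v s (F K) z"
    using Cp2_unfold(1)[OF F] by blast
  have hAA: "\<And>s K z. s \<in> {0..t 0} \<Longrightarrow> K \<subseteq> {1..\<tau>} \<Longrightarrow> z \<in> D \<Longrightarrow> hasA v s (dA v s (F K)) z"
    using Cp2_unfold(2)[OF F] by blast
  have hB: "\<And>u K z. u \<in> {1..\<tau>} \<Longrightarrow> K \<subseteq> {1..\<tau>} \<Longrightarrow> z \<in> D \<Longrightarrow> hasB u (F K) z"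
    using Cp2_unfoldB(1)[OF F] by blast
  have hBB: "\<And>u K z. u \<in> {1..\<tau>} \<Longrightarrow> K \<subseteq> {1..\<tau>} \<Longrightarrow> z \<in> D \<Longrightarrow> hasB u (dB u (F K)) z"
    using Cp2_unfoldB(2)[OF F] by blast
  have iA: "\<And>s. s \<in> {0..t 0} \<Longrightarrow> \<forall>a b. (a, b) \<in> D \<longrightarrow> dd f (v s) (a + betaJ \<tau> b J) = (\<Sum>K\<in>Pow {1..\<tau>}. JK J K * dA v s (F K) (a, b))"
    using indJ[OF induces_A[OF ind _ hA] J] by blast
  have iB: "\<And>u. u \<in> {1..\<tau>} \<Longrightarrow> \<forall>a b. (a, b) \<in> D \<longrightarrow> dd f (J u) (a + betaJ \<tau> b J) = (\<Sum>K\<in>Pow {1..\<tau>}. JK J K * dB u (F K) (a, b))"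
    using induces_B[OF ind _ hB J] by blast
  show "\<forall>s\<in>{0..t 0}. hasd f (v s) (a + betaJ \<tau> b J) \<and> hasd (dd f (v s)) (v s) (a + betaJ \<tau> b J)"
    using dd_A(1)[OF iJ ab J] dd_A(1)[OF iA ab J] hA hAA ab by blast
  show "\<forall>u\<in>{1..\<tau>}. hasd f (J u) (a + betaJ \<tau> b J) \<and> hasd (dd f (J u)) (J u) (a + betaJ \<tau> b J)"
    using dd_B(1)[OF iJ ab J] dd_B(1)[OF iB ab J] hB hBB ab by blast
  have "(\<Sum>s=0..t 0. dd (dd f (v s)) (v s) (a + betaJ \<tau> b J)) + (\<Sum>u=1..\<tau>. dd (dd f (J u)) (J u) (a + betaJ \<tau> b J))
     = (\<Sum>s=0..t 0. \<Sum>K\<in>Pow {1..\<tau>}. JK J K * dA v s (dA v s (F K)) (a, b))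
       + (\<Sum>u=1..\<tau>. \<Sum>K\<in>Pow {1..\<tau>}. JK J K * dB u (dB u (F K)) (a, b))"
    using dd_A(2)[OF iA ab J] dd_B(2)[OF iB ab J] hAA hBB ab by (intro arg_cong2[where f = "(+)"] sum.cong) auto
  also have "\<dots> = (\<Sum>K\<in>Pow {1..\<tau>}. \<Sum>s=0..t 0. JK J K * dA v s (dA v s (F K)) (a, b))
       + (\<Sum>K\<in>Pow {1..\<tau>}. \<Sum>u=1..\<tau>. JK J K * dB u (dB u (F K)) (a, b))"
    by (rule arg_cong2[where f = "(+)"]; rule sum.swap)
  also have "\<dots> = (\<Sum>K\<in>Pow {1..\<tau>}. JK J K * ((\<Sum>s=0..t 0. dA v s (dA v s (F K)) (a, b)) + (\<Sum>u=1..\<tau>. dB u (dB u (F K)) (a, b))))"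
    by (simp add: distrib_left sum_distrib_left sum.distrib)
  also have "\<dots> = (\<Sum>K\<in>Pow {1..\<tau>}. JK J K * LapT v (t 0) \<tau> F K (a, b))"
    using lap_identity[OF ab F] unfolding LapT_def by (intro sum.cong) auto
  finally show "(\<Sum>s=0..t 0. dd (dd f (v s)) (v s) (a + betaJ \<tau> b J)) + (\<Sum>u=1..\<tau>. dd (dd f (J u)) (J u) (a + betaJ \<tau> b J))
       = (\<Sum>K\<in>Pow {1..\<tau>}. JK J K * LapT v (t 0) \<tau> F K (a, b))" .
qed

lemma part3:
  assumes FS: "F \<in> Stem v (t 0) \<tau> D 2" and ind: "induces v t \<tau> D F f"
  shows "T_harmonic v t \<tau> D f \<longleftrightarrow> Ivanishes v t \<tau> D (LapT v (t 0) \<tau> F)"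
proof -
  have F: "\<And>K. K \<subseteq> {1..\<tau>} \<Longrightarrow> Cp v (t 0) \<tau> D 2 (F K)" using FS unfolding Stem_def by auto
  show ?thesis
  proof
    assume R: "T_harmonic v t \<tau> D f"
    show "Ivanishes v t \<tau> D (LapT v (t 0) \<tau> F)"
      unfolding Ivanishes_def
    proof (intro allI impI)
      fix a b J assume ab: "(a, b) \<in> D" and J: "J \<in> torus v t \<tau>"
      have "(\<Sum>s=0..t 0. dd (dd f (v s)) (v s) (a + betaJ \<tau> b J)) + (\<Sum>u=1..\<tau>. dd (dd f (J u)) (J u) (a + betaJ \<tau> b J)) = 0"
        using R point_in[OF ab J] J unfolding T_harmonic_def by blast
      then show "(\<Sum>K\<in>Pow {1..\<tau>}. JK J K * LapT v (t 0) \<tau> F K (a, b)) = 0"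
        using harm_point(3)[OF F ind ab J] by simp
    qed
  next
    assume I: "Ivanishes v t \<tau> D (LapT v (t 0) \<tau> F)"
    show "T_harmonic v t \<tau> D f"
      unfolding T_harmonic_def
    proof (intro ballI)
      fix J x assume J: "J \<in> torus v t \<tau>" and x: "x \<in> OmegaD v t \<tau> D \<inter> RJ v (t 0) \<tau> J"
      then obtain a b where ab: "(a, b) \<in> D" "x = a + betaJ \<tau> b J" using RJ_decomp by blast
      show "(\<forall>s\<in>{0..t 0}. hasd f (v s) x \<and> hasd (dd f (v s)) (v s) x) \<and>
          (\<forall>u\<in>{1..\<tau>}. hasd f (J u) x \<and> hasd (dd f (J u)) (J u) x) \<and>
          (\<Sum>s=0..t 0. dd (dd f (v s)) (v s) x) + (\<Sum>u=1..\<tau>. dd (dd f (J u)) (J u) x) = 0"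
      proof -
        have I0: "(\<Sum>K\<in>Pow {1..\<tau>}. JK J K * LapT v (t 0) \<tau> F K (a, b)) = 0"
          using I ab(1) J unfolding Ivanishes_def by blast
        have "(\<Sum>s=0..t 0. dd (dd f (v s)) (v s) x) + (\<Sum>u=1..\<tau>. dd (dd f (J u)) (J u) x) = 0"
          using harm_point(3)[OF F ind ab(1) J] I0 ab(2) by simp
        then show ?thesis using harm_point(1,2)[OF F ind ab(1) J] ab(2) by simp
      qed
    qed
  qed
qed

lemma vanish_pointwise:
  assumes "Ivanishes v t \<tau> D G" "K \<subseteq> {1..\<tau>}" "z \<in> D"
  shows "G K z = 0"
proof -
  obtain a b where z: "z = (a, b)" by (cases z)
  show ?thesis unfolding z
    by (rule inj_I[of "\<lambda>K. G K (a, b)"]) (use assms z in \<open>auto simp: Ivanishes_def\<close>)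
qed

lemma pointwise_vanish:
  assumes "\<forall>K z. K \<subseteq> {1..\<tau>} \<longrightarrow> z \<in> D \<longrightarrow> G K z = 0"
  shows "Ivanishes v t \<tau> D G"
  using assms unfolding Ivanishes_def by simp

lemma part2:
  "SR v t \<tau> D = {f. \<exists>F\<in>Stem v (t 0) \<tau> D 1.
                     (\<forall>K z. K \<subseteq> {1..\<tau>} \<longrightarrow> z \<in> D \<longrightarrow> dbarT v (t 0) \<tau> F K z = 0)
                     \<and> induces v t \<tau> D F f}" (is "_ = ?R")
proof (intro set_eqI iffI)
  fix f assume "f \<in> SR v t \<tau> D"
  then obtain F where F: "F \<in> Stem v (t 0) \<tau> D 1" "induces v t \<tau> D F f" "T_regular v t \<tau> D f"
    unfolding SR_def Sp_def by blast
  then have "Ivanishes v t \<tau> D (dbarT v (t 0) \<tau> F)" using part1 by blast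
  then have "\<forall>K z. K \<subseteq> {1..\<tau>} \<longrightarrow> z \<in> D \<longrightarrow> dbarT v (t 0) \<tau> F K z = 0"
    using vanish_pointwise by blast
  then show "f \<in> ?R" using F by blast
next
  fix f assume "f \<in> ?R"
  then obtain F where F: "F \<in> Stem v (t 0) \<tau> D 1" "induces v t \<tau> D F f"
    "\<forall>K z. K \<subseteq> {1..\<tau>} \<longrightarrow> z \<in> D \<longrightarrow> dbarT v (t 0) \<tau> F K z = 0" by blast
  then have "T_regular v t \<tau> D f" using part1 pointwise_vanish by blast
  then show "f \<in> SR v t \<tau> D" using F unfolding SR_def Sp_def by blast
qed

lemma part4:
  "{f \<in> Sp v t \<tau> D 2. T_harmonic v t \<tau> D f}
       = {f. \<exists>F\<in>Stem v (t 0) \<tau> D 2.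
               (\<forall>K z. K \<subseteq> {1..\<tau>} \<longrightarrow> z \<in> D \<longrightarrow> LapT v (t 0) \<tau> F K z = 0)
               \<and> induces v t \<tau> D F f}" (is "?L = ?R")
proof (intro set_eqI iffI)
  fix f assume "f \<in> ?L"
  then obtain F where F: "F \<in> Stem v (t 0) \<tau> D 2" "induces v t \<tau> D F f" "T_harmonic v t \<tau> D f"
    unfolding Sp_def by blast
  then have "Ivanishes v t \<tau> D (LapT v (t 0) \<tau> F)" using part3 by blast
  then have "\<forall>K z. K \<subseteq> {1..\<tau>} \<longrightarrow> z \<in> D \<longrightarrow> LapT v (t 0) \<tau> F K z = 0"
    using vanish_pointwise by blast
  then show "f \<in> ?R" using F by blast
next
  fix f assume "f \<in> ?R"
  then obtain F where F: "F \<in> Stem v (t 0) \<tau> D 2" "induces v t \<tau> D F f"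
    "\<forall>K z. K \<subseteq> {1..\<tau>} \<longrightarrow> z \<in> D \<longrightarrow> LapT v (t 0) \<tau> F K z = 0" by blast
  then have "T_harmonic v t \<tau> D f" using part3 pointwise_vanish by blast
  then show "f \<in> ?L" using F unfolding Sp_def by blast
qed

end

theorem corollary3p10:
  fixes cj :: "'a::{real_algebra_1,euclidean_space} \<Rightarrow> 'a"
    and v :: "nat \<Rightarrow> 'a" and N :: nat and t :: "nat \<Rightarrow> nat" and \<tau> :: nat
    and D :: "'a stempt set"
  assumes inv_lin: "linear cj"
    and inv_anti: "\<And>x y. cj (x * y) = cj y * cj x"
    and inv_inv: "\<And>x. cj (cj x) = x"
    and SA_ne: "SA cj \<noteq> {}"
    and N1: "N \<ge> 1"
    and v0: "v 0 = 1"
    and vS: "\<And>s. s \<in> {1..N} \<Longrightarrow> v s \<in> SA cj"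
    and vanti: "\<And>s r. s \<in> {1..N} \<Longrightarrow> r \<in> {1..N} \<Longrightarrow> s \<noteq> r \<Longrightarrow> v s * v r = - (v r * v s)"
    and vON: "\<And>s r. s \<le> N \<Longrightarrow> r \<le> N \<Longrightarrow> inner (v s) (v r) = (if s = r then 1 else 0)"
    and Vslice: "\<And>x. x \<in> Rlm v 0 N \<Longrightarrow> \<exists>J\<in>SA cj. \<exists>a b. x = a *\<^sub>R 1 + b *\<^sub>R J"
    and t_mono: "strict_mono_on {0..\<tau>} t"
    and t_last: "t \<tau> = N"
    and D_open: "openin (top_of_set (Rlm v 0 (t 0) \<times> Rtau \<tau>)) D"
    and D_refl: "\<And>\<alpha> \<beta> h. (\<alpha>, \<beta>) \<in> D \<Longrightarrow> h \<in> {1..\<tau>} \<Longrightarrow> (\<alpha>, flip h \<beta>) \<in> D"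
    and Omega_open: "openin (top_of_set (Rlm v 0 N)) (OmegaD v t \<tau> D)"
  shows
    "(\<forall>F f. F \<in> Stem v (t 0) \<tau> D 1 \<and> induces v t \<tau> D F f \<longrightarrow>
        (T_regular v t \<tau> D f \<longleftrightarrow> Ivanishes v t \<tau> D (dbarT v (t 0) \<tau> F)))
   \<and> (connected (OmegaD v t \<tau> D) \<longrightarrow>
        SR v t \<tau> D = {f. \<exists>F\<in>Stem v (t 0) \<tau> D 1.
                           (\<forall>K z. K \<subseteq> {1..\<tau>} \<longrightarrow> z \<in> D \<longrightarrow> dbarT v (t 0) \<tau> F K z = 0)
                           \<and> induces v t \<tau> D F f})
   \<and> (\<forall>F f. F \<in> Stem v (t 0) \<tau> D 2 \<and> induces v t \<tau> D F f \<longrightarrow>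
        (T_harmonic v t \<tau> D f \<longleftrightarrow> Ivanishes v t \<tau> D (LapT v (t 0) \<tau> F)))
   \<and> {f \<in> Sp v t \<tau> D 2. T_harmonic v t \<tau> D f}
       = {f. \<exists>F\<in>Stem v (t 0) \<tau> D 2.
               (\<forall>K z. K \<subseteq> {1..\<tau>} \<longrightarrow> z \<in> D \<longrightarrow> LapT v (t 0) \<tau> F K z = 0)
               \<and> induces v t \<tau> D F f}"
proof -
  have vsq: "v s * v s = -1" if "s \<in> {1..N}" for s
  proof -
    have "v s + cj (v s) = 0" "v s * cj (v s) = 1" using vS[OF that] unfolding SA_def by auto
    then have "cj (v s) = - v s" by (simp add: eq_neg_iff_add_eq_0 add.commute)
    then have "- (v s * v s) = 1" using \<open>v s * cj (v s) = 1\<close> by simp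
    then show ?thesis by (metis minus_minus)
  qed
  interpret cs3 v N t \<tau> D
  proof (unfold_locales)
    show "v 0 = 1" by (rule v0)
    show "\<And>s. s \<in> {1..N} \<Longrightarrow> v s * v s = -1" by (rule vsq)
    show "\<And>s r. s \<in> {1..N} \<Longrightarrow> r \<in> {1..N} \<Longrightarrow> s \<noteq> r \<Longrightarrow> v s * v r = - (v r * v s)" by (rule vanti)
    show "\<And>s r. s \<le> N \<Longrightarrow> r \<le> N \<Longrightarrow> inner (v s) (v r) = (if s = r then 1 else 0)" by (rule vON)
    show "strict_mono_on {0..\<tau>} t" by (rule t_mono)
    show "t \<tau> = N" by (rule t_last)
    show "openin (top_of_set (Rlm v 0 (t 0) \<times> Rtau \<tau>)) D" by (rule D_open)
    show "\<And>\<alpha> \<beta> h. (\<alpha>, \<beta>) \<in> D \<Longrightarrow> h \<in> {1..\<tau>} \<Longrightarrow> (\<alpha>, flip h \<beta>) \<in> D" by (rule D_refl)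
  qed
  show ?thesis using part1 part2 part3 part4 by blast
qed

end
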